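(* Let $\mathfrak{h}$ be a $3$-step nilpotent real Lie algebra endowed with a Lorentzian inner product whose center is non-degenerate, and suppose this metric is $\lambda$-Einstein. Then $\lambda\geq0$.
   Context: Lorentzian means a nondegenerate symmetric bilinear form of signature $(1,n-1)$. Ricci operator of a Lie algebra with pseudo-Euclidean inner product: Levi-Civita product $2\langle \mathrm{L}_uv,w\rangle=\langle[u,v],w\rangle+\langle[w,u],v\rangle+\langle[w,v],u\rangle$, curvature $K(u,v)=\mathrm{L}_{[u,v]}-[\mathrm{L}_u,\mathrm{L}_v]$, $\langle\mathrm{Ric}\,u,v\rangle=\mathrm{tr}(w\mapsto K(u,w)v)$; $\lambda$-Einstein means $\mathrm{Ric}=\lambda\,\mathrm{Id}$. *)

theory Defs
  imports "HOL-Analysis.Analysis"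
begin

definition lie_algebra :: "('a::euclidean_space \<Rightarrow> 'a \<Rightarrow> 'a) \<Rightarrow> bool" where
  "lie_algebra br \<longleftrightarrow> bilinear br \<and> (\<forall>x. br x x = 0) \<and>
     (\<forall>x y z. br x (br y z) + br y (br z x) + br z (br x y) = 0)"

definition nondegenerate :: "('a::euclidean_space \<Rightarrow> 'a \<Rightarrow> real) \<Rightarrow> bool" where
  "nondegenerate g \<longleftrightarrow> (\<forall>x. (\<forall>y. g x y = 0) \<longrightarrow> x = 0)"

definition lorentzian :: "('a::euclidean_space \<Rightarrow> 'a \<Rightarrow> real) \<Rightarrow> bool" where
  "lorentzian g \<longleftrightarrow> bilinear g \<and> (\<forall>x y. g x y = g y x) \<and> nondegenerate g \<and>
     (\<exists>B e0. independent B \<and> span B = UNIV \<and> e0 \<in> B \<and> g e0 e0 = -1 \<and>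
        (\<forall>e\<in>B - {e0}. g e e = 1) \<and> (\<forall>e\<in>B. \<forall>f\<in>B. e \<noteq> f \<longrightarrow> g e f = 0))"

fun lcs :: "('a::euclidean_space \<Rightarrow> 'a \<Rightarrow> 'a) \<Rightarrow> nat \<Rightarrow> 'a set" where
  "lcs br 0 = UNIV"
| "lcs br (Suc k) = span {br x y | x y. x \<in> lcs br k}"

definition three_step_nilpotent :: "('a::euclidean_space \<Rightarrow> 'a \<Rightarrow> 'a) \<Rightarrow> bool" where
  "three_step_nilpotent br \<longleftrightarrow> lcs br 3 = {0} \<and> lcs br 2 \<noteq> {0}"

definition center :: "('a::euclidean_space \<Rightarrow> 'a \<Rightarrow> 'a) \<Rightarrow> 'a set" where
  "center br = {z. \<forall>x. br z x = 0}"

definition nondegenerate_on :: "('a::euclidean_space \<Rightarrow> 'a \<Rightarrow> real) \<Rightarrow> 'a set \<Rightarrow> bool" where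
  "nondegenerate_on g S \<longleftrightarrow> (\<forall>z\<in>S. (\<forall>w\<in>S. g z w = 0) \<longrightarrow> z = 0)"

definition LC :: "('a::euclidean_space \<Rightarrow> 'a \<Rightarrow> 'a) \<Rightarrow> ('a \<Rightarrow> 'a \<Rightarrow> real) \<Rightarrow> 'a \<Rightarrow> 'a \<Rightarrow> 'a" where
  "LC br g u v = (THE x. \<forall>w. 2 * g x w = g (br u v) w + g (br w u) v + g (br w v) u)"

definition curv :: "('a::euclidean_space \<Rightarrow> 'a \<Rightarrow> 'a) \<Rightarrow> ('a \<Rightarrow> 'a \<Rightarrow> real) \<Rightarrow> 'a \<Rightarrow> 'a \<Rightarrow> 'a \<Rightarrow> 'a" where
  "curv br g u v w = LC br g (br u v) w - (LC br g u (LC br g v w) - LC br g v (LC br g u w))"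

definition trace :: "('a::euclidean_space \<Rightarrow> 'a) \<Rightarrow> real" where
  "trace f = (\<Sum>b\<in>Basis. f b \<bullet> b)"

definition ricci :: "('a::euclidean_space \<Rightarrow> 'a \<Rightarrow> 'a) \<Rightarrow> ('a \<Rightarrow> 'a \<Rightarrow> real) \<Rightarrow> 'a \<Rightarrow> 'a" where
  "ricci br g u = (THE x. \<forall>v. g x v = trace (\<lambda>w. curv br g u w v))"

definition einstein :: "('a::euclidean_space \<Rightarrow> 'a \<Rightarrow> 'a) \<Rightarrow> ('a \<Rightarrow> 'a \<Rightarrow> real) \<Rightarrow> real \<Rightarrow> bool" where
  "einstein br g lam \<longleftrightarrow> (\<forall>u. ricci br g u = lam *\<^sub>R u)"

end

theory Submission
  imports Defs
begin

locale lz0 =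
  fixes br :: "'a::euclidean_space \<Rightarrow> 'a \<Rightarrow> 'a" and g :: "'a \<Rightarrow> 'a \<Rightarrow> real"
  assumes lie: "lie_algebra br" and gbil: "bilinear g" and gsym: "\<And>x y. g x y = g y x"
    and gnd: "\<And>x. (\<And>y. g x y = 0) \<Longrightarrow> x = 0"
begin

lemma brbil: "bilinear br" using lie unfolding lie_algebra_def by auto
lemma br_self[simp]: "br x x = 0" using lie unfolding lie_algebra_def by auto
lemma jacobi: "br x (br y z) + br y (br z x) + br z (br x y) = 0" using lie unfolding lie_algebra_def by auto

lemma g_addL[simp]: "g (x + y) z = g x z + g y z" by (rule bilinear_ladd[OF gbil])
lemma g_addR[simp]: "g z (x + y) = g z x + g z y" by (rule bilinear_radd[OF gbil])
lemma g_subL[simp]: "g (x - y) z = g x z - g y z" by (rule bilinear_lsub[OF gbil])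
lemma g_subR[simp]: "g z (x - y) = g z x - g z y" by (rule bilinear_rsub[OF gbil])
lemma g_negL[simp]: "g (- x) z = - g x z" by (rule bilinear_lneg[OF gbil])
lemma g_negR[simp]: "g z (- x) = - g z x" by (rule bilinear_rneg[OF gbil])
lemma g_scaleL[simp]: "g (c *\<^sub>R x) z = c * g x z" using bilinear_lmul[OF gbil] by simp
lemma g_scaleR[simp]: "g z (c *\<^sub>R x) = c * g z x" using bilinear_rmul[OF gbil] by simp
lemma g_zeroL[simp]: "g 0 z = 0" by (rule bilinear_lzero[OF gbil])
lemma g_zeroR[simp]: "g z 0 = 0" by (rule bilinear_rzero[OF gbil])
lemma g_linL: "linear (\<lambda>x. g x z)" using gbil unfolding bilinear_def by auto
lemma g_linR: "linear (\<lambda>x. g z x)" using gbil unfolding bilinear_def by auto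
lemma g_sumL[simp]: "g (sum f S) z = (\<Sum>i\<in>S. g (f i) z)"
  by (rule linear_sum[OF g_linL])
lemma g_sumR[simp]: "g z (sum f S) = (\<Sum>i\<in>S. g z (f i))"
  by (rule linear_sum[OF g_linR])

lemma br_addL[simp]: "br (x + y) z = br x z + br y z" by (rule bilinear_ladd[OF brbil])
lemma br_addR[simp]: "br z (x + y) = br z x + br z y" by (rule bilinear_radd[OF brbil])
lemma br_subL[simp]: "br (x - y) z = br x z - br y z" by (rule bilinear_lsub[OF brbil])
lemma br_subR[simp]: "br z (x - y) = br z x - br z y" by (rule bilinear_rsub[OF brbil])
lemma br_negL[simp]: "br (- x) z = - br x z" by (rule bilinear_lneg[OF brbil])
lemma br_negR[simp]: "br z (- x) = - br z x" by (rule bilinear_rneg[OF brbil])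
lemma br_scaleL[simp]: "br (c *\<^sub>R x) z = c *\<^sub>R br x z" using bilinear_lmul[OF brbil] by simp
lemma br_scaleR[simp]: "br z (c *\<^sub>R x) = c *\<^sub>R br z x" using bilinear_rmul[OF brbil] by simp
lemma br_zeroL[simp]: "br 0 z = 0" by (rule bilinear_lzero[OF brbil])
lemma br_zeroR[simp]: "br z 0 = 0" by (rule bilinear_rzero[OF brbil])
lemma br_linL: "linear (\<lambda>x. br x z)" using brbil unfolding bilinear_def by auto
lemma br_linR: "linear (\<lambda>x. br z x)" using brbil unfolding bilinear_def by auto
lemma br_sumL[simp]: "br (sum f S) z = (\<Sum>i\<in>S. br (f i) z)"
  by (rule linear_sum[OF br_linL])
lemma br_sumR[simp]: "br z (sum f S) = (\<Sum>i\<in>S. br z (f i))"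
  by (rule linear_sum[OF br_linR])
lemma br_anti: "br y x = - br x y"
proof -
  have "br (x+y) (x+y) = br x x + br x y + br y x + br y y" by (simp add: algebra_simps del: br_self)
  then have "br x y + br y x = 0" by simp
  then show ?thesis by (metis add.commute eq_neg_iff_add_eq_0)
qed

lemma g_ext: "(\<And>w. g x w = g y w) \<Longrightarrow> x = y"
proof -
  assume h: "\<And>w. g x w = g y w"
  have "x - y = 0" by (rule gnd) (simp add: h)
  then show ?thesis by simp
qed

definition frame :: "'a set \<Rightarrow> ('a \<Rightarrow> 'a) \<Rightarrow> bool" where
  "frame I fd \<longleftrightarrow> finite I \<and> (\<forall>x. x = (\<Sum>a\<in>I. g x (fd a) *\<^sub>R a))"

lemma frame_rep: "frame I fd \<Longrightarrow> x = (\<Sum>a\<in>I. g x (fd a) *\<^sub>R a)"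
  unfolding frame_def by blast

lemma frame_g: assumes "frame I fd" shows "g x y = (\<Sum>a\<in>I. g x (fd a) * g a y)"
proof -
  have "g x y = g (\<Sum>a\<in>I. g x (fd a) *\<^sub>R a) y" using frame_rep[OF assms, of x] by simp
  then show ?thesis by simp
qed

lemma frame_fs:
  assumes fr: "frame I fd" and l1: "\<And>x. linear (\<beta> x)" and l2: "\<And>y. linear (\<lambda>x. \<beta> x y)"
  shows "(\<Sum>a\<in>I. \<beta> a (fd a)) = (\<Sum>a\<in>I. (\<beta> (fd a) a :: real))"
proof -
  have fin: "finite I" using fr unfolding frame_def by auto
  have e1: "\<beta> a (fd a) = (\<Sum>b\<in>I. g (fd a) (fd b) * \<beta> a b)" for a
  proof -
    have "\<beta> a (fd a) = \<beta> a (\<Sum>b\<in>I. g (fd a) (fd b) *\<^sub>R b)" using frame_rep[OF fr, of "fd a"] by simp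
    also have "\<dots> = (\<Sum>b\<in>I. g (fd a) (fd b) * \<beta> a b)"
      by (simp add: linear_sum[OF l1] linear_scale[OF l1])
    finally show ?thesis .
  qed
  have e2: "\<beta> (fd a) a = (\<Sum>b\<in>I. g (fd a) (fd b) * \<beta> b a)" for a
  proof -
    have "\<beta> (fd a) a = (\<lambda>x. \<beta> x a) (\<Sum>b\<in>I. g (fd a) (fd b) *\<^sub>R b)" using frame_rep[OF fr, of "fd a"] by simp
    also have "\<dots> = (\<Sum>b\<in>I. g (fd a) (fd b) * \<beta> b a)"
      by (simp add: linear_sum[OF l2] linear_scale[OF l2])
    finally show ?thesis .
  qed
  have "(\<Sum>a\<in>I. \<beta> (fd a) a) = (\<Sum>a\<in>I. \<Sum>b\<in>I. g (fd a) (fd b) * \<beta> b a)" by (simp add: e2)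
  also have "\<dots> = (\<Sum>b\<in>I. \<Sum>a\<in>I. g (fd a) (fd b) * \<beta> b a)" by (rule sum.swap)
  also have "\<dots> = (\<Sum>b\<in>I. \<Sum>a\<in>I. g (fd b) (fd a) * \<beta> b a)" by (simp add: gsym)
  also have "\<dots> = (\<Sum>a\<in>I. \<beta> a (fd a))" by (simp add: e1)
  finally show ?thesis by simp
qed

lemma frame_tr:
  assumes fr: "frame I fd" and lM: "linear M"
  shows "trace M = (\<Sum>a\<in>I. g (M a) (fd a))"
proof -
  have "trace M = (\<Sum>b\<in>Basis. M b \<bullet> b)" unfolding trace_def ..
  also have "\<dots> = (\<Sum>b\<in>Basis. \<Sum>a\<in>I. g (M b) (fd a) * (a \<bullet> b))"
  proof (rule sum.cong[OF refl])
    fix b :: 'a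
    have "M b \<bullet> b = (\<Sum>a\<in>I. g (M b) (fd a) *\<^sub>R a) \<bullet> b" using frame_rep[OF fr, of "M b"] by simp
    then show "M b \<bullet> b = (\<Sum>a\<in>I. g (M b) (fd a) * (a \<bullet> b))" by (simp add: inner_sum_left)
  qed
  also have "\<dots> = (\<Sum>a\<in>I. \<Sum>b\<in>Basis. g (M b) (fd a) * (a \<bullet> b))" by (rule sum.swap)
  also have "\<dots> = (\<Sum>a\<in>I. g (M a) (fd a))"
  proof (rule sum.cong[OF refl])
    fix a :: 'a
    have "g (M a) (fd a) = g (M (\<Sum>b\<in>Basis. (a \<bullet> b) *\<^sub>R b)) (fd a)" by (simp add: euclidean_representation)
    also have "\<dots> = (\<Sum>b\<in>Basis. g (M b) (fd a) * (a \<bullet> b))"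
      by (simp add: linear_sum[OF lM] linear_scale[OF lM] mult.commute)
    finally show "(\<Sum>b\<in>Basis. g (M b) (fd a) * (a \<bullet> b)) = g (M a) (fd a)" by simp
  qed
  finally show ?thesis .
qed

lemma frame_biorth:
  assumes fin: "finite I"
    and bo: "\<And>a b. a \<in> I \<Longrightarrow> b \<in> I \<Longrightarrow> g a (fd b) = (if a = b then 1 else 0)"
    and cmp: "\<And>x. (\<And>a. a \<in> I \<Longrightarrow> g x (fd a) = 0) \<Longrightarrow> x = 0"
  shows "frame I fd"
  unfolding frame_def
proof (intro conjI allI fin)
  fix x
  define y where "y = x - (\<Sum>a\<in>I. g x (fd a) *\<^sub>R a)"
  have "g y (fd b) = 0" if bI: "b \<in> I" for b
  proof -
    have "(\<Sum>a\<in>I. g x (fd a) * g a (fd b)) = (\<Sum>a\<in>I. if a = b then g x (fd a) else 0)"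
      by (rule sum.cong[OF refl]) (simp add: bo bI)
    also have "\<dots> = g x (fd b)" using fin bI by (simp add: sum.delta)
    finally show ?thesis unfolding y_def by simp
  qed
  then have "y = 0" by (rule cmp)
  then show "x = (\<Sum>a\<in>I. g x (fd a) *\<^sub>R a)" unfolding y_def by simp
qed

end

locale lz = lz0 +
  assumes frex: "\<exists>I fd. finite I \<and> (\<forall>x. x = (\<Sum>a\<in>I. g x (fd a) *\<^sub>R a))"
begin

lemma frame_ex: "\<exists>p. frame (fst p) (snd p)"
  using frex unfolding frame_def by auto

definition "fI = fst (SOME p. frame (fst p) (snd p))"
definition "ffd = snd (SOME p. frame (fst p) (snd p))"
lemma frame0: "frame fI ffd"
  unfolding fI_def ffd_def using someI_ex[OF frame_ex] .

definition sharp :: "('a \<Rightarrow> real) \<Rightarrow> 'a" where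
  "sharp \<phi> = (\<Sum>a\<in>fI. \<phi> a *\<^sub>R ffd a)"

lemma sharp_g: assumes "linear \<phi>" shows "g (sharp \<phi>) x = \<phi> x"
proof -
  have "\<phi> x = \<phi> (\<Sum>a\<in>fI. g x (ffd a) *\<^sub>R a)" using frame_rep[OF frame0, of x] by simp
  also have "\<dots> = (\<Sum>a\<in>fI. g x (ffd a) * \<phi> a)"
    by (simp add: linear_sum[OF assms] linear_scale[OF assms])
  also have "\<dots> = g (sharp \<phi>) x" unfolding sharp_def by (simp add: gsym mult.commute)
  finally show ?thesis by simp
qed

end

context lz begin

lemma linI: assumes "\<And>x y. f (x + y) = f x + f y" "\<And>c x. f (c *\<^sub>R x) = c *\<^sub>R f x"
  shows "linear f"
  by (rule linearI) (use assms in auto)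

lemma lc_g: "g (LC br g u v) w = (g (br u v) w + g (br w u) v + g (br w v) u) / 2"
proof -
  let ?P = "\<lambda>x. \<forall>w. 2 * g x w = g (br u v) w + g (br w u) v + g (br w v) u"
  define X where "X = sharp (\<lambda>w. (g (br u v) w + g (br w u) v + g (br w v) u) / 2)"
  have lin: "linear (\<lambda>w. (g (br u v) w + g (br w u) v + g (br w v) u) / 2)"
    by (rule linI) (simp_all add: algebra_simps add_divide_distrib)
  have PX: "?P X" unfolding X_def by (simp add: sharp_g[OF lin])
  have "?P (LC br g u v)"
    unfolding LC_def
  proof (rule theI[of ?P X])
    show "?P X" by (rule PX)
    fix y assume "?P y"
    with PX have "\<And>w. g y w = g X w" by (metis mult_cancel_left zero_neq_numeral)
    then show "y = X" by (rule g_ext)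
  qed
  then show ?thesis by (metis nonzero_mult_div_cancel_left zero_neq_numeral)
qed

definition adj :: "('a \<Rightarrow> 'a) \<Rightarrow> 'a \<Rightarrow> 'a" where
  "adj M v = sharp (\<lambda>x. g v (M x))"

lemma adj_g: assumes "linear M" shows "g (adj M v) x = g v (M x)"
proof -
  have "linear (\<lambda>x. g v (M x))"
    by (rule linI) (simp_all add: linear_add[OF assms] linear_scale[OF assms])
  then show ?thesis unfolding adj_def by (rule sharp_g)
qed

lemma adj_lin: assumes "linear M" shows "linear (adj M)"
proof (rule linI)
  fix x y show "adj M (x + y) = adj M x + adj M y"
    by (rule g_ext) (simp add: adj_g[OF assms])
next
  fix c x show "adj M (c *\<^sub>R x) = c *\<^sub>R adj M x"
    by (rule g_ext) (simp add: adj_g[OF assms])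
qed

lemma adj_g2: assumes "linear M" shows "g x (adj M v) = g (M x) v"
  using adj_g[OF assms] gsym by metis

lemma adj_comp: assumes "linear P" "linear Q" shows "adj (P \<circ> Q) = adj Q \<circ> adj P"
proof (rule ext)
  fix v
  have lPQ: "linear (P \<circ> Q)" using assms by (simp add: linear_compose)
  show "adj (P \<circ> Q) v = (adj Q \<circ> adj P) v"
    by (rule g_ext) (simp add: adj_g[OF lPQ] adj_g[OF assms(2)] adj_g[OF assms(1)])
qed

lemma adj_adj: assumes "linear P" shows "adj (adj P) = P"
proof (rule ext)
  fix v
  show "adj (adj P) v = P v"
    by (rule g_ext) (simp add: adj_g[OF adj_lin[OF assms]] adj_g2[OF assms])
qed

lemma tr_adj: assumes "linear P" shows "trace (adj P) = trace P"
proof -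
  have "trace (adj P) = (\<Sum>a\<in>fI. g (adj P a) (ffd a))" by (rule frame_tr[OF frame0 adj_lin[OF assms]])
  also have "\<dots> = (\<Sum>a\<in>fI. g a (P (ffd a)))" by (simp add: adj_g[OF assms])
  also have "\<dots> = (\<Sum>a\<in>fI. g (P (ffd a)) a)" by (rule sum.cong[OF refl]) (rule gsym)
  also have "\<dots> = (\<Sum>a\<in>fI. g (P a) (ffd a))"
  proof -
    have "(\<Sum>a\<in>fI. (\<lambda>p q. g (P q) p) a (ffd a)) = (\<Sum>a\<in>fI. (\<lambda>p q. g (P q) p) (ffd a) a)"
      by (rule frame_fs[OF frame0]) (rule linI; simp add: linear_add[OF assms] linear_scale[OF assms])+
    then show ?thesis by simp
  qed
  also have "\<dots> = trace P" by (rule frame_tr[OF frame0 assms, symmetric])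
  finally show ?thesis .
qed

lemma tr_comm: fixes P Q :: "'a \<Rightarrow> 'a" assumes "linear P" "linear Q" shows "trace (P \<circ> Q) = trace (Q \<circ> P)"
proof -
  have lPQ: "linear (P \<circ> Q)" "linear (Q \<circ> P)" using assms by (simp_all add: linear_compose)
  have e: "\<And>(P::'a\<Rightarrow>'a) (Q::'a\<Rightarrow>'a). linear P \<Longrightarrow> linear Q \<Longrightarrow> trace (P \<circ> Q) = (\<Sum>a\<in>fI. \<Sum>b\<in>fI. g (Q a) (ffd b) * g (P b) (ffd a))"
  proof -
    fix P Q :: "'a \<Rightarrow> 'a" assume lp: "linear P" and lq: "linear Q"
    have "trace (P \<circ> Q) = (\<Sum>a\<in>fI. g ((P \<circ> Q) a) (ffd a))"
      by (rule frame_tr[OF frame0]) (simp add: lp lq linear_compose)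
    also have "\<dots> = (\<Sum>a\<in>fI. g (P (Q a)) (ffd a))" by simp
    also have "\<dots> = (\<Sum>a\<in>fI. \<Sum>b\<in>fI. g (Q a) (ffd b) * g (P b) (ffd a))"
    proof (rule sum.cong[OF refl])
      fix a
      have "g (P (Q a)) (ffd a) = g (P (\<Sum>b\<in>fI. g (Q a) (ffd b) *\<^sub>R b)) (ffd a)"
        using frame_rep[OF frame0, of "Q a"] by simp
      also have "\<dots> = (\<Sum>b\<in>fI. g (Q a) (ffd b) * g (P b) (ffd a))"
        by (simp add: linear_sum[OF lp] linear_scale[OF lp])
      finally show "g (P (Q a)) (ffd a) = (\<Sum>b\<in>fI. g (Q a) (ffd b) * g (P b) (ffd a))" .
    qed
    finally show "trace (P \<circ> Q) = (\<Sum>a\<in>fI. \<Sum>b\<in>fI. g (Q a) (ffd b) * g (P b) (ffd a))" .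
  qed
  have "trace (P \<circ> Q) = (\<Sum>a\<in>fI. \<Sum>b\<in>fI. g (Q a) (ffd b) * g (P b) (ffd a))" by (rule e[OF assms])
  also have "\<dots> = (\<Sum>b\<in>fI. \<Sum>a\<in>fI. g (Q a) (ffd b) * g (P b) (ffd a))" by (rule sum.swap)
  also have "\<dots> = trace (Q \<circ> P)" by (simp add: e[OF assms(2,1)] mult.commute)
  finally show ?thesis .
qed

end

context lz begin

definition "Aop x = adj (br x)"
definition "Cop y = (\<lambda>w. adj (br w) y)"

lemma A_g: "g (Aop x v) w = g v (br x w)"
  unfolding Aop_def by (rule adj_g[OF br_linR])
lemma C_g: "g (Cop y w) z = g y (br w z)"
  unfolding Cop_def by (rule adj_g[OF br_linR])
lemma lin_A: "linear (Aop x)" unfolding Aop_def by (rule adj_lin[OF br_linR])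
lemma lin_C: "linear (Cop y)"
proof (rule linI)
  fix a b show "Cop y (a + b) = Cop y a + Cop y b" by (rule g_ext) (simp add: C_g)
next
  fix c a show "Cop y (c *\<^sub>R a) = c *\<^sub>R Cop y a" by (rule g_ext) (simp add: C_g)
qed
lemma adj_C: "adj (Cop y) v = - Cop y v"
proof (rule g_ext)
  fix z
  have "g (adj (Cop y) v) z = g v (Cop y z)" by (rule adj_g[OF lin_C])
  also have "\<dots> = g (Cop y z) v" by (rule gsym)
  also have "\<dots> = g y (br z v)" by (rule C_g)
  also have "\<dots> = - g y (br v z)" by (subst br_anti) simp
  also have "\<dots> = g (- Cop y v) z" by (simp add: C_g)
  finally show "g (adj (Cop y) v) z = g (- Cop y v) z" .
qed
lemma adj_A: "adj (Aop x) = br x" unfolding Aop_def by (rule adj_adj[OF br_linR])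

lemma LC_formula: "LC br g u v = (1/2) *\<^sub>R (br u v - Aop u v - Cop u v)"
proof (rule g_ext)
  fix w
  have e1: "g (br w u) v = - g v (br u w)" by (subst br_anti) (simp add: gsym)
  have e2: "g (br w v) u = - g u (br v w)" by (subst br_anti) (simp add: gsym)
  show "g (LC br g u v) w = g ((1/2) *\<^sub>R (br u v - Aop u v - Cop u v)) w"
    by (simp add: lc_g A_g C_g e1 e2 field_simps)
qed

lemma Phi_pt: "LC br g w y = -(1/2) *\<^sub>R (br y w + Cop y w + Aop y w)"
proof -
  have "Aop w y = Cop y w" unfolding Aop_def Cop_def ..
  moreover have "Cop w y = Aop y w" unfolding Aop_def Cop_def ..
  moreover have "br w y = - br y w" by (rule br_anti)
  ultimately show ?thesis by (simp add: LC_formula algebra_simps)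
qed

lemma lin_LC: "linear (LC br g x)"
proof (rule linI)
  fix a b show "LC br g x (a + b) = LC br g x a + LC br g x b"
    by (simp add: LC_formula linear_add[OF lin_A] linear_add[OF lin_C] algebra_simps)
next
  fix c a show "LC br g x (c *\<^sub>R a) = c *\<^sub>R LC br g x a"
    by (simp add: LC_formula linear_scale[OF lin_A] linear_scale[OF lin_C] algebra_simps)
qed

lemma LC_skew: "g (LC br g x y) z = - g y (LC br g x z)"
proof -
  have "g y (LC br g x z) = g (LC br g x z) y" by (rule gsym)
  moreover have "g (br y x) z = - g (br x y) z" by (subst br_anti) simp
  moreover have "g (br z x) y = - g (br x z) y" by (subst br_anti) simp
  moreover have "g (br y z) x = - g (br z y) x" by (subst br_anti) simp
  ultimately show ?thesis by (simp add: lc_g)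
qed

lemma tr_add: "trace (\<lambda>w. f w + h w) = trace f + trace h"
  unfolding trace_def by (simp add: inner_add_left sum.distrib)
lemma tr_diff: "trace (\<lambda>w. f w - h w) = trace f - trace h"
  unfolding trace_def by (simp add: inner_diff_left sum_subtractf)
lemma tr_scale: "trace (\<lambda>w. c *\<^sub>R f w) = c * trace f"
  unfolding trace_def by (simp add: sum_distrib_left)
lemma tr_neg: "trace (\<lambda>w. - f w) = - trace f"
  unfolding trace_def by (simp add: sum_negf)

lemma tr_Phi: fixes P :: "'a \<Rightarrow> 'a" assumes "linear P"
  shows "trace (\<lambda>w. P (LC br g w y)) = -(1/2) * (trace (\<lambda>w. P (br y w)) + trace (\<lambda>w. P (Cop y w)) + trace (\<lambda>w. P (Aop y w)))"
proof -
  have "(\<lambda>w. P (LC br g w y)) = (\<lambda>w. -(1/2) *\<^sub>R ((P (br y w) + P (Cop y w)) + P (Aop y w)))"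
    by (simp add: Phi_pt linear_add[OF assms] linear_scale[OF assms] linear_neg[OF assms])
  then show ?thesis by (simp add: tr_scale tr_add tr_neg)
qed

lemma tr_adj2: fixes P Q :: "'a \<Rightarrow> 'a" assumes "linear P" "linear Q"
  shows "trace (\<lambda>w. adj P (adj Q w)) = trace (\<lambda>w. Q (P w))"
proof -
  have "(\<lambda>w. adj P (adj Q w)) = adj (Q \<circ> P)" using adj_comp[OF assms(2,1)] by (simp add: o_def)
  then have "trace (\<lambda>w. adj P (adj Q w)) = trace (Q \<circ> P)"
    using tr_adj[of "Q \<circ> P"] assms by (simp add: linear_compose)
  then show ?thesis by (simp add: o_def)
qed

lemma tr_comm': fixes P Q :: "'a \<Rightarrow> 'a" assumes "linear P" "linear Q"
  shows "trace (\<lambda>w. P (Q w)) = trace (\<lambda>w. Q (P w))"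
  using tr_comm[OF assms] by (simp add: o_def)

lemma tr_C0: "trace (Cop m) = 0"
proof -
  have "trace (adj (Cop m)) = trace (Cop m)" by (rule tr_adj[OF lin_C])
  moreover have "adj (Cop m) = (\<lambda>v. - Cop m v)" by (rule ext) (rule adj_C)
  ultimately have "trace (\<lambda>v. - Cop m v) = trace (Cop m)" by simp
  then show ?thesis by (simp add: tr_neg)
qed

lemma Cop_neg: "Cop y v = - adj (Cop y) v" by (simp add: adj_C)

lemma ric_formula:
  assumes tr0: "\<And>z. trace (br z) = 0" and kil: "\<And>x y. trace (\<lambda>w. br x (br y w)) = 0"
  shows "trace (\<lambda>w. curv br g x w y) = -(1/2) * trace (\<lambda>w. Aop y (br x w)) - (1/4) * trace (\<lambda>w. Cop x (Cop y w))"
proof -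
  let ?m = "LC br g x y"
  let ?L = "LC br g"
  have curv_pt: "(\<lambda>w. curv br g x w y) = (\<lambda>w. ?L (br x w) y - (?L x (?L w y) - ?L w ?m))"
    by (simp add: curv_def)
  have T1: "trace (\<lambda>w. ?L (br x w) y) = -(1/2) * (trace (\<lambda>w. br y (br x w)) + trace (\<lambda>w. Cop y (br x w)) + trace (\<lambda>w. Aop y (br x w)))"
  proof -
    have "(\<lambda>w. ?L (br x w) y) = (\<lambda>w. -(1/2) *\<^sub>R ((br y (br x w) + Cop y (br x w)) + Aop y (br x w)))"
      by (simp add: Phi_pt)
    then show ?thesis by (simp add: tr_scale tr_add tr_neg)
  qed
  have T2a: "trace (\<lambda>w. ?L x (?L w y)) = (1/2) * (trace (\<lambda>w. br x (?L w y)) - trace (\<lambda>w. Aop x (?L w y)) - trace (\<lambda>w. Cop x (?L w y)))"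
  proof -
    have "(\<lambda>w. ?L x (?L w y)) = (\<lambda>w. (1/2) *\<^sub>R ((br x (?L w y) - Aop x (?L w y)) - Cop x (?L w y)))"
      by (rule ext) (rule LC_formula)
    then show ?thesis by (simp add: tr_scale tr_diff)
  qed
  note P1 = tr_Phi[OF br_linR, of x y] and P2 = tr_Phi[OF lin_A, of x y] and P3 = tr_Phi[OF lin_C, of x y]
  have T3: "trace (\<lambda>w. ?L w ?m) = 0"
  proof -
    have "trace (\<lambda>w. (\<lambda>v. v) (?L w ?m)) = -(1/2) * (trace (\<lambda>w. br ?m w) + trace (\<lambda>w. Cop ?m w) + trace (\<lambda>w. Aop ?m w))"
      by (rule tr_Phi) (rule linear_ident)
    moreover have "trace (Aop ?m) = 0" unfolding Aop_def using tr_adj[OF br_linR] tr0 by simp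
    ultimately show ?thesis using tr0 tr_C0 by simp
  qed
  have ia: "trace (\<lambda>w. Aop x (br y w)) = trace (\<lambda>w. Aop y (br x w))"
    using tr_adj2[OF br_linR lin_A, of x y] by (simp add: adj_A Aop_def[symmetric])
  have ib: "trace (\<lambda>w. br x (Aop y w)) = trace (\<lambda>w. Aop y (br x w))"
    by (rule tr_comm'[OF br_linR lin_A])
  have ic: "trace (\<lambda>w. Aop x (Aop y w)) = 0"
    using tr_adj2[OF br_linR br_linR, of x y] kil by (simp add: Aop_def)
  have id: "trace (\<lambda>w. Aop x (Cop y w)) = - trace (\<lambda>w. Cop y (br x w))"
  proof -
    have "(\<lambda>w. Aop x (Cop y w)) = (\<lambda>w. - adj (br x) (adj (Cop y) w))"
      by (rule ext) (simp add: Cop_neg[of y] linear_neg[OF adj_lin[OF br_linR]] Aop_def)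
    then show ?thesis using tr_adj2[OF br_linR lin_C, of x y] by (simp add: tr_neg)
  qed
  have ie: "trace (\<lambda>w. Cop x (Aop y w)) = - trace (\<lambda>w. Cop x (br y w))"
  proof -
    have "(\<lambda>w. Cop x (Aop y w)) = (\<lambda>w. - adj (Cop x) (adj (br y) w))"
      by (rule ext) (simp add: Cop_neg[of x] Aop_def)
    then have "trace (\<lambda>w. Cop x (Aop y w)) = - trace (\<lambda>w. br y (Cop x w))"
      using tr_adj2[OF lin_C br_linR, of x y] by (simp add: tr_neg)
    also have "\<dots> = - trace (\<lambda>w. Cop x (br y w))" using tr_comm'[OF br_linR lin_C, of y x] by simp
    finally show ?thesis .
  qed
  have if': "trace (\<lambda>w. br x (Cop y w)) = trace (\<lambda>w. Cop y (br x w))"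
    by (rule tr_comm'[OF br_linR lin_C])
  have k1: "trace (\<lambda>w. br y (br x w)) = 0" by (rule kil)
  have k2: "trace (\<lambda>w. br x (br y w)) = 0" by (rule kil)
  have "trace (\<lambda>w. curv br g x w y) = trace (\<lambda>w. ?L (br x w) y) - (trace (\<lambda>w. ?L x (?L w y)) - trace (\<lambda>w. ?L w ?m))"
    unfolding curv_pt by (simp add: tr_diff)
  also have "\<dots> = -(1/2) * trace (\<lambda>w. Aop y (br x w)) - (1/4) * trace (\<lambda>w. Cop x (Cop y w))"
    unfolding T1 T2a T3 P1 P2 P3 ia ib ic id ie if' k1 k2 by (simp add: algebra_simps)
  finally show ?thesis .
qed

end

context lz begin

lemma lin_curv: "linear (\<lambda>v. curv br g u w v)"
proof -
  have "linear (\<lambda>v. LC br g (br u w) v - (LC br g u (LC br g w v) - LC br g w (LC br g u v)))"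
  proof -
    have l2: "linear (\<lambda>v. LC br g u (LC br g w v))" using linear_compose[OF lin_LC lin_LC] by (simp add: o_def)
    have l3: "linear (\<lambda>v. LC br g w (LC br g u v))" using linear_compose[OF lin_LC lin_LC] by (simp add: o_def)
    show ?thesis by (rule linear_compose_sub[OF lin_LC linear_compose_sub[OF l2 l3]])
  qed
  then show ?thesis unfolding curv_def .
qed

lemma lin_trc: "linear (\<lambda>v. trace (\<lambda>w. curv br g u w v))"
proof (rule linI)
  fix a b
  have "(\<lambda>w. curv br g u w (a + b)) = (\<lambda>w. curv br g u w a + curv br g u w b)"
    by (simp add: linear_add[OF lin_curv])
  then show "trace (\<lambda>w. curv br g u w (a + b)) = trace (\<lambda>w. curv br g u w a) + trace (\<lambda>w. curv br g u w b)"
    by (simp add: tr_add)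
next
  fix c a
  have "(\<lambda>w. curv br g u w (c *\<^sub>R a)) = (\<lambda>w. c *\<^sub>R curv br g u w a)"
    by (simp add: linear_scale[OF lin_curv])
  then show "trace (\<lambda>w. curv br g u w (c *\<^sub>R a)) = c *\<^sub>R trace (\<lambda>w. curv br g u w a)"
    by (simp add: tr_scale)
qed

lemma ricci_g: "g (ricci br g u) v = trace (\<lambda>w. curv br g u w v)"
proof -
  let ?P = "\<lambda>x. \<forall>v. g x v = trace (\<lambda>w. curv br g u w v)"
  define X where "X = sharp (\<lambda>v. trace (\<lambda>w. curv br g u w v))"
  have PX: "?P X" unfolding X_def by (simp add: sharp_g[OF lin_trc])
  have "?P (ricci br g u)"
    unfolding ricci_def
  proof (rule theI[of ?P X])
    show "?P X" by (rule PX)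
    fix y assume "?P y"
    with PX have "\<And>w. g y w = g X w" by simp
    then show "y = X" by (rule g_ext)
  qed
  then show ?thesis by simp
qed

lemma C_skew: "g (Cop x v) w = - g v (Cop x w)"
proof -
  have "g (Cop x v) w = g x (br v w)" by (rule C_g)
  also have "\<dots> = - g x (br w v)" by (subst br_anti) simp
  also have "\<dots> = - g (Cop x w) v" by (simp add: C_g)
  also have "\<dots> = - g v (Cop x w)" by (simp add: gsym)
  finally show ?thesis .
qed

lemma C_g2: "g z (Cop y w) = g y (br w z)"
  using C_g[of y w z] gsym[of z "Cop y w"] by simp

lemma gg: "g u v * g x y = g v u * g y x"
  using gsym[of u v] gsym[of x y] by simp

lemma sum3_rot: "(\<Sum>a\<in>I. \<Sum>b\<in>I. \<Sum>c\<in>I. (f a b c :: real)) = (\<Sum>c\<in>I. \<Sum>a\<in>I. \<Sum>b\<in>I. f a b c)"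
proof -
  have "(\<Sum>a\<in>I. \<Sum>b\<in>I. \<Sum>c\<in>I. f a b c) = (\<Sum>a\<in>I. \<Sum>c\<in>I. \<Sum>b\<in>I. f a b c)"
    by (rule sum.cong[OF refl]) (rule sum.swap)
  also have "\<dots> = (\<Sum>c\<in>I. \<Sum>a\<in>I. \<Sum>b\<in>I. f a b c)" by (rule sum.swap)
  finally show ?thesis .
qed

lemma cert:
  assumes ein: "einstein br g lam"
    and fr: "frame I fd" and diag: "\<And>a. a \<in> I \<Longrightarrow> g a (fd a) = 1"
    and trz: "\<And>z a. a \<in> I \<Longrightarrow> g (br z a) (fd a) = 0"
    and kz: "\<And>x y a. a \<in> I \<Longrightarrow> g (br x (br y a)) (fd a) = 0"
    and trm: "\<And>a b c. a \<in> I \<Longrightarrow> b \<in> I \<Longrightarrow> c \<in> I \<Longrightarrow>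
                 0 \<le> (t a - t b - t c) * (g (br b c) (fd a) * g (br (fd b) (fd c)) a)"
    and pos: "0 < (\<Sum>a\<in>I. t a)"
  shows "0 \<le> lam"
proof -
  define P where "P a b c = g (br b c) (fd a) * g (br (fd b) (fd c)) a" for a b c
  have tr0: "trace (br z) = 0" for z
    using frame_tr[OF fr br_linR, of z] trz by simp
  have kil: "trace (\<lambda>w. br x (br y w)) = 0" for x y
  proof -
    have "linear (\<lambda>w. br x (br y w))" using linear_compose[OF br_linR br_linR] by (simp add: o_def)
    then show ?thesis using frame_tr[OF fr] kz by simp
  qed
  have loc: "lam = -(1/2) * (\<Sum>b\<in>I. \<Sum>c\<in>I. P c a b) + (1/4) * (\<Sum>b\<in>I. \<Sum>c\<in>I. P a b c)"
    if aI: "a \<in> I" for a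
  proof -
    have "trace (\<lambda>w. curv br g a w (fd a)) = g (ricci br g a) (fd a)" by (simp add: ricci_g)
    also have "\<dots> = lam" using ein diag[OF aI] unfolding einstein_def by simp
    finally have e0: "trace (\<lambda>w. curv br g a w (fd a)) = lam" .
    have lA: "linear (\<lambda>w. Aop (fd a) (br a w))" using linear_compose[OF br_linR lin_A] by (simp add: o_def)
    have lC: "linear (\<lambda>w. Cop a (Cop (fd a) w))" using linear_compose[OF lin_C lin_C] by (simp add: o_def)
    have e1: "trace (\<lambda>w. Aop (fd a) (br a w)) = (\<Sum>b\<in>I. \<Sum>c\<in>I. P c a b)"
    proof -
      have "trace (\<lambda>w. Aop (fd a) (br a w)) = (\<Sum>b\<in>I. g (Aop (fd a) (br a b)) (fd b))"
        using frame_tr[OF fr lA] by simp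
      also have "\<dots> = (\<Sum>b\<in>I. \<Sum>c\<in>I. P c a b)"
      proof (rule sum.cong[OF refl])
        fix b
        have "g (Aop (fd a) (br a b)) (fd b) = g (br a b) (br (fd a) (fd b))" by (rule A_g)
        also have "\<dots> = (\<Sum>c\<in>I. g (br a b) (fd c) * g c (br (fd a) (fd b)))" by (rule frame_g[OF fr])
        also have "\<dots> = (\<Sum>c\<in>I. P c a b)" unfolding P_def
          by (rule sum.cong[OF refl]) (simp add: gsym[of _ "br (fd a) (fd b)"])
        finally show "g (Aop (fd a) (br a b)) (fd b) = (\<Sum>c\<in>I. P c a b)" .
      qed
      finally show ?thesis .
    qed
    have e2: "trace (\<lambda>w. Cop a (Cop (fd a) w)) = - (\<Sum>b\<in>I. \<Sum>c\<in>I. P a b c)"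
    proof -
      have "trace (\<lambda>w. Cop a (Cop (fd a) w)) = (\<Sum>b\<in>I. g (Cop a (Cop (fd a) b)) (fd b))"
        using frame_tr[OF fr lC] by simp
      also have "\<dots> = (\<Sum>b\<in>I. - (\<Sum>c\<in>I. P a b c))"
      proof (rule sum.cong[OF refl])
        fix b
        have "g (Cop a (Cop (fd a) b)) (fd b) = - g (Cop (fd a) b) (Cop a (fd b))" by (rule C_skew)
        also have "\<dots> = - (\<Sum>c\<in>I. g (Cop (fd a) b) (fd c) * g c (Cop a (fd b)))"
          using frame_g[OF fr, of "Cop (fd a) b" "Cop a (fd b)"] by simp
        also have "\<dots> = - (\<Sum>c\<in>I. g (fd a) (br b (fd c)) * g a (br (fd b) c))"
          by (simp add: C_g C_g2)
        also have "\<dots> = - (\<Sum>c\<in>I. g (fd a) (br b c) * g a (br (fd b) (fd c)))"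
        proof -
          have l1: "linear (\<lambda>q. g (fd a) (br b q) * g a (br (fd b) p))" for p
            by (rule linI) (simp_all add: distrib_right)
          have l2: "linear (\<lambda>p. g (fd a) (br b q) * g a (br (fd b) p))" for q
            by (rule linI) (simp_all add: distrib_left)
          have "(\<Sum>c\<in>I. (\<lambda>p q. g (fd a) (br b q) * g a (br (fd b) p)) c (fd c))
              = (\<Sum>c\<in>I. (\<lambda>p q. g (fd a) (br b q) * g a (br (fd b) p)) (fd c) c)"
            by (rule frame_fs[OF fr]) (simp_all only: l1 l2)
          then show ?thesis by simp
        qed
        also have "\<dots> = - (\<Sum>c\<in>I. P a b c)" unfolding P_def
          by (rule arg_cong[where f=uminus], rule sum.cong[OF refl], rule gg)
        finally show "g (Cop a (Cop (fd a) b)) (fd b) = - (\<Sum>c\<in>I. P a b c)" .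
      qed
      also have "\<dots> = - (\<Sum>b\<in>I. \<Sum>c\<in>I. P a b c)" by (simp add: sum_negf)
      finally show ?thesis .
    qed
    have "lam = -(1/2) * trace (\<lambda>w. Aop (fd a) (br a w)) - (1/4) * trace (\<lambda>w. Cop a (Cop (fd a) w))"
      using ric_formula[OF tr0 kil, of a "fd a"] e0 by linarith
    then show ?thesis unfolding e1 e2 by simp
  qed
  have Psym: "P a b c = P a c b" for a b c
    unfolding P_def by (simp add: br_anti[of c b] br_anti[of "fd c" "fd b"])
  have S1: "(\<Sum>a\<in>I. \<Sum>b\<in>I. \<Sum>c\<in>I. t a * P c a b) = (\<Sum>a\<in>I. \<Sum>b\<in>I. \<Sum>c\<in>I. t b * P a b c)"
    by (rule sum3_rot)
  have S2: "(\<Sum>a\<in>I. \<Sum>b\<in>I. \<Sum>c\<in>I. t b * P a b c) = (\<Sum>a\<in>I. \<Sum>b\<in>I. \<Sum>c\<in>I. t c * P a b c)"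
  proof (rule sum.cong[OF refl])
    fix a
    have "(\<Sum>b\<in>I. \<Sum>c\<in>I. t b * P a b c) = (\<Sum>c\<in>I. \<Sum>b\<in>I. t b * P a b c)" by (rule sum.swap)
    also have "\<dots> = (\<Sum>b\<in>I. \<Sum>c\<in>I. t c * P a b c)" by (simp add: Psym[of a])
    finally show "(\<Sum>b\<in>I. \<Sum>c\<in>I. t b * P a b c) = (\<Sum>b\<in>I. \<Sum>c\<in>I. t c * P a b c)" .
  qed
  define X where "X a = (\<Sum>b\<in>I. \<Sum>c\<in>I. P c a b)" for a
  define Y where "Y a = (\<Sum>b\<in>I. \<Sum>c\<in>I. P a b c)" for a
  define SA where "SA = (\<Sum>a\<in>I. \<Sum>b\<in>I. \<Sum>c\<in>I. t a * P a b c)"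
  define SB where "SB = (\<Sum>a\<in>I. \<Sum>b\<in>I. \<Sum>c\<in>I. t b * P a b c)"
  define SC where "SC = (\<Sum>a\<in>I. \<Sum>b\<in>I. \<Sum>c\<in>I. t c * P a b c)"
  have "lam * (\<Sum>a\<in>I. t a) = (\<Sum>a\<in>I. t a * lam)" by (simp add: sum_distrib_left mult.commute)
  also have "\<dots> = (\<Sum>a\<in>I. t a * (-(1/2) * X a + (1/4) * Y a))"
    by (rule sum.cong[OF refl]) (simp add: loc X_def Y_def)
  also have "\<dots> = (\<Sum>a\<in>I. -(1/2) * (t a * X a) + (1/4) * (t a * Y a))"
    by (rule sum.cong[OF refl]) (simp add: algebra_simps)
  also have "\<dots> = (\<Sum>a\<in>I. -(1/2) * (t a * X a)) + (\<Sum>a\<in>I. (1/4) * (t a * Y a))"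
    by (rule sum.distrib)
  also have "\<dots> = -(1/2) * (\<Sum>a\<in>I. t a * X a) + (1/4) * (\<Sum>a\<in>I. t a * Y a)"
    by (simp only: sum_distrib_left)
  finally have e': "lam * (\<Sum>a\<in>I. t a) = -(1/2) * (\<Sum>a\<in>I. t a * X a) + (1/4) * (\<Sum>a\<in>I. t a * Y a)" .
  have eX: "(\<Sum>a\<in>I. t a * X a) = (\<Sum>a\<in>I. \<Sum>b\<in>I. \<Sum>c\<in>I. t a * P c a b)"
    unfolding X_def by (simp only: sum_distrib_left)
  have eY: "(\<Sum>a\<in>I. t a * Y a) = SA"
    unfolding Y_def SA_def by (simp only: sum_distrib_left)
  have e: "lam * (\<Sum>a\<in>I. t a) = -(1/2) * SB + (1/4) * SA"
    using e' eX eY S1 unfolding SB_def by simp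
  have "SB = SC" unfolding SB_def SC_def by (rule S2)
  have "(\<Sum>a\<in>I. \<Sum>b\<in>I. \<Sum>c\<in>I. (t a - t b - t c) * P a b c) = SA - SB - SC"
    unfolding SA_def SB_def SC_def by (simp only: left_diff_distrib sum_subtractf)
  moreover have "(\<Sum>a\<in>I. \<Sum>b\<in>I. \<Sum>c\<in>I. (t a - t b - t c) * P a b c) \<ge> 0"
  proof (intro sum_nonneg)
    fix a b c assume "a \<in> I" "b \<in> I" "c \<in> I"
    then show "0 \<le> (t a - t b - t c) * P a b c" unfolding P_def by (rule trm)
  qed
  ultimately have "0 \<le> lam * (\<Sum>a\<in>I. t a)" using e \<open>SB = SC\<close> by linarith
  with pos show ?thesis by (simp add: zero_le_mult_iff)
qed

end

context lz begin

lemma g_span0: assumes "\<And>b. b \<in> B \<Longrightarrow> g x b = 0" "y \<in> span B" shows "g x y = 0"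
  using linear_eq_0_on_span[OF g_linR, of B x y] assms by blast

lemma onb:
  assumes "subspace S" "\<And>x. x \<in> S \<Longrightarrow> x \<noteq> 0 \<Longrightarrow> 0 < g x x"
  shows "\<exists>B. finite B \<and> B \<subseteq> S \<and> S \<subseteq> span B \<and> (\<forall>b\<in>B. g b b = 1) \<and> (\<forall>b\<in>B. \<forall>c\<in>B. b \<noteq> c \<longrightarrow> g b c = 0)"
  using assms
proof (induction "dim S" arbitrary: S rule: less_induct)
  case less
  show ?case
  proof (cases "S \<subseteq> {0}")
    case True
    then show ?thesis by (intro exI[of _ "{}"]) auto
  next
    case False
    then obtain v where vS: "v \<in> S" and v0: "v \<noteq> 0" by auto
    have gv: "0 < g v v" using less.prems(2)[OF vS v0] .
    define e where "e = (1 / sqrt (g v v)) *\<^sub>R v"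
    have ee: "g e e = 1" using gv unfolding e_def by (simp add: power2_eq_square[symmetric])
    have eS: "e \<in> S" unfolding e_def using vS less.prems(1) by (simp add: subspace_scale)
    define S' where "S' = {x \<in> S. g x e = 0}"
    have sub': "subspace S'" using less.prems(1) unfolding S'_def subspace_def by auto
    have S'S: "S' \<subseteq> S" unfolding S'_def by auto
    have eS': "e \<notin> S'" using ee unfolding S'_def by auto
    have "dim S' < dim S"
    proof (rule dim_psubset)
      have "span S' = S'" using sub' by (simp add: span_eq_iff)
      moreover have "span S = S" using less.prems(1) by (simp add: span_eq_iff)
      ultimately show "span S' \<subset> span S" using S'S eS eS' by (simp only:) blast
    qed
    from less.hyps[OF this sub'] less.prems(2) S'S obtain B' where
      B': "finite B'" "B' \<subseteq> S'" "S' \<subseteq> span B'" "\<forall>b\<in>B'. g b b = 1" "\<forall>b\<in>B'. \<forall>c\<in>B'. b \<noteq> c \<longrightarrow> g b c = 0"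
      by blast
    show ?thesis
    proof (intro exI[of _ "insert e B'"] conjI)
      show "finite (insert e B')" using B'(1) by simp
      show "insert e B' \<subseteq> S" using eS B'(2) S'S by auto
      show "S \<subseteq> span (insert e B')"
      proof
        fix x assume xS: "x \<in> S"
        have "x - g x e *\<^sub>R e \<in> S'"
          unfolding S'_def using xS eS less.prems(1) ee by (simp add: subspace_diff subspace_scale)
        then have "x - g x e *\<^sub>R e \<in> span (insert e B')" using B'(3) span_mono[of B' "insert e B'"] by auto
        moreover have "g x e *\<^sub>R e \<in> span (insert e B')" by (simp add: span_base span_scale)
        ultimately have "(x - g x e *\<^sub>R e) + g x e *\<^sub>R e \<in> span (insert e B')" by (rule span_add)
        then show "x \<in> span (insert e B')" by simp
      qed
      show "\<forall>b\<in>insert e B'. g b b = 1" using ee B'(4) by auto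
      have "\<forall>b\<in>B'. g b e = 0" using B'(2) unfolding S'_def by auto
      then show "\<forall>b\<in>insert e B'. \<forall>c\<in>insert e B'. b \<noteq> c \<longrightarrow> g b c = 0"
        using B'(5) gsym by auto
    qed
  qed
qed

lemma proj_orth:
  assumes "finite B" "\<forall>b\<in>B. g b b = 1" "\<forall>b\<in>B. \<forall>c\<in>B. b \<noteq> c \<longrightarrow> g b c = 0" "c \<in> B"
  shows "g (x - (\<Sum>b\<in>B. g x b *\<^sub>R b)) c = 0"
proof -
  have "(\<Sum>b\<in>B. g x b * g b c) = (\<Sum>b\<in>B. if b = c then g x b else 0)"
    by (rule sum.cong[OF refl]) (use assms in auto)
  also have "\<dots> = g x c" using assms by (simp add: sum.delta)
  finally show ?thesis by simp
qed

lemma cs0: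
  assumes "subspace S" "\<And>x. x \<in> S \<Longrightarrow> 0 \<le> g x x" "x \<in> S" "g x x = 0" "y \<in> S"
  shows "g x y = 0"
proof -
  define a where "a = g x y"
  define G where "G = g y y"
  have G0: "0 \<le> G" unfolding G_def using assms by auto
  define r where "r = - a / (G + 1)"
  have "x + r *\<^sub>R y \<in> S" using assms by (simp add: subspace_add subspace_scale)
  then have "0 \<le> g (x + r *\<^sub>R y) (x + r *\<^sub>R y)" by (rule assms(2))
  also have "\<dots> = 2 * r * a + r * r * G"
    unfolding a_def G_def using assms(4) gsym[of y x] by (simp add: algebra_simps)
  finally have E0: "0 \<le> 2 * r * a + r * r * G" .
  have G1: "G + 1 \<noteq> 0" using G0 by simp
  have r1: "r * (G + 1) = - a" unfolding r_def using G1 by simp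
  have "(G + 1) * (G + 1) * (2 * r * a + r * r * G) = 2 * a * (r * (G + 1)) * (G + 1) + G * (r * (G + 1)) * (r * (G + 1))"
    by (simp add: algebra_simps)
  also have "\<dots> = - (a * a) * (G + 2)" unfolding r1 by (simp add: algebra_simps)
  finally have "(G + 1) * (G + 1) * (2 * r * a + r * r * G) = - (a * a) * (G + 2)" .
  moreover have "0 \<le> (G + 1) * (G + 1) * (2 * r * a + r * r * G)" using E0 G0 by simp
  ultimately have "a * a * (G + 2) \<le> 0" by simp
  then have "a * a \<le> 0" using G0 by (simp add: mult_le_0_iff)
  then show ?thesis unfolding a_def by (metis mult_le_0_iff antisym)
qed

end

locale lor = lz +
  fixes e0 :: 'a
  assumes e0neg: "g e0 e0 = -1" and e0pos: "\<And>y. g y e0 = 0 \<Longrightarrow> y \<noteq> 0 \<Longrightarrow> 0 < g y y"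
begin

lemma tl_perp: assumes tt: "g t t < 0" and xt: "g x t = 0" and x0: "x \<noteq> 0" shows "0 < g x x"
proof (rule ccontr)
  assume "\<not> 0 < g x x" hence xx: "g x x \<le> 0" by simp
  have te: "g t e0 \<noteq> 0"
  proof
    assume h: "g t e0 = 0"
    show False
    proof (cases "t = 0")
      case True then show False using tt by simp
    next
      case False then show False using e0pos[OF h] tt by simp
    qed
  qed
  define y where "y = g x e0 *\<^sub>R t - g t e0 *\<^sub>R x"
  have ye: "g y e0 = 0" unfolding y_def by (simp add: algebra_simps)
  have tx: "g t x = 0" using xt gsym by metis
  have "g y y = (g x e0)^2 * g t t + (g t e0)^2 * g x x"
    unfolding y_def using xt tx by (simp add: algebra_simps power2_eq_square)
  also have "\<dots> \<le> 0" using tt xx by (simp add: add_nonpos_nonpos mult_nonneg_nonpos)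
  finally have "g y y \<le> 0" .
  then have y0: "y = 0" using e0pos[OF ye] by force
  then have "g t e0 *\<^sub>R x = g x e0 *\<^sub>R t" unfolding y_def by simp
  then have xe: "x = (g x e0 / g t e0) *\<^sub>R t" using te
    by (metis (no_types, lifting) divide_inverse_commute scaleR_scaleR inverse_eq_divide scaleR_one right_inverse mult.commute)
  then have "g x t = (g x e0 / g t e0) * g t t" by (metis g_scaleL)
  then have h: "g x e0 / g t e0 = 0" using xt tt by simp
  have "x = 0" using xe h by (metis scaleR_zero_left)
  then show False using x0 by simp
qed

lemma null_par: assumes "g n n = 0" "g u u = 0" "g n u = 0" "n \<noteq> 0" shows "\<exists>c. u = c *\<^sub>R n"
proof -
  have ne: "g n e0 \<noteq> 0" using e0pos[of n] assms by force
  define y where "y = g u e0 *\<^sub>R n - g n e0 *\<^sub>R u"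
  have ye: "g y e0 = 0" unfolding y_def by (simp add: algebra_simps)
  have un: "g u n = 0" using assms(3) gsym by metis
  have "g y y = 0" unfolding y_def using assms un by (simp add: algebra_simps)
  then have "y = 0" using e0pos[OF ye] by force
  then have "g n e0 *\<^sub>R u = g u e0 *\<^sub>R n" unfolding y_def by simp
  then have "u = (g u e0 / g n e0) *\<^sub>R n" using ne
    by (metis (no_types, lifting) divide_inverse_commute scaleR_scaleR inverse_eq_divide scaleR_one right_inverse mult.commute)
  then show ?thesis by blast
qed

end

context lz begin

lemma cert_orth:
  assumes ein: "einstein br g lam" and fin: "finite I"
    and nrm: "\<And>a. a \<in> I \<Longrightarrow> g a a = s a" and sgn: "\<And>a. a \<in> I \<Longrightarrow> s a = 1 \<or> s a = -1"
    and orth: "\<And>a b. a \<in> I \<Longrightarrow> b \<in> I \<Longrightarrow> a \<noteq> b \<Longrightarrow> g a b = 0"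
    and cmp: "\<And>x. (\<And>a. a \<in> I \<Longrightarrow> g x a = 0) \<Longrightarrow> x = 0"
    and tr1: "\<And>z a. a \<in> I \<Longrightarrow> g (br z a) a = 0"
    and tr2: "\<And>x y a. a \<in> I \<Longrightarrow> g (br x (br y a)) a = 0"
    and sg: "\<And>a b c. a \<in> I \<Longrightarrow> b \<in> I \<Longrightarrow> c \<in> I \<Longrightarrow> (w a - w b - w c) * (s a * s b * s c) < 0 \<Longrightarrow> g (br b c) a = 0"
    and pos: "0 < (\<Sum>a\<in>I. w a)"
  shows "0 \<le> lam"
proof -
  define fd where "fd a = s a *\<^sub>R a" for a
  have ss: "s a * s a = 1" if "a \<in> I" for a using sgn[OF that] by auto
  have fr: "frame I fd"
  proof (rule frame_biorth[OF fin])
    fix a b assume aI: "a \<in> I" and bI: "b \<in> I"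
    show "g a (fd b) = (if a = b then 1 else 0)"
      using orth[OF aI bI] nrm[OF bI] ss[OF bI] unfolding fd_def by auto
  next
    fix x assume h: "\<And>a. a \<in> I \<Longrightarrow> g x (fd a) = 0"
    show "x = 0"
    proof (rule cmp)
      fix a assume aI: "a \<in> I"
      have "s a * g x a = 0" using h[OF aI] unfolding fd_def by simp
      then show "g x a = 0" using sgn[OF aI] by auto
    qed
  qed
  show ?thesis
  proof (rule cert[OF ein fr, of w])
    fix a assume "a \<in> I" then show "g a (fd a) = 1" unfolding fd_def using nrm ss by simp
  next
    fix z a assume "a \<in> I" then show "g (br z a) (fd a) = 0" unfolding fd_def using tr1 by simp
  next
    fix x y a assume "a \<in> I" then show "g (br x (br y a)) (fd a) = 0" unfolding fd_def using tr2 by simp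
  next
    fix a b c assume aI: "a \<in> I" and bI: "b \<in> I" and cI: "c \<in> I"
    have eq: "(w a - w b - w c) * (g (br b c) (fd a) * g (br (fd b) (fd c)) a)
        = ((w a - w b - w c) * (s a * s b * s c)) * (g (br b c) a * g (br b c) a)"
      unfolding fd_def using gsym[of a "br b c"] by (simp add: algebra_simps)
    show "0 \<le> (w a - w b - w c) * (g (br b c) (fd a) * g (br (fd b) (fd c)) a)"
    proof (cases "(w a - w b - w c) * (s a * s b * s c) < 0")
      case True
      then show ?thesis unfolding eq using sg[OF aI bI cI True] by simp
    next
      case False
      then show ?thesis unfolding eq by (simp add: not_less)
    qed
  next
    show "0 < (\<Sum>a\<in>I. w a)" by (rule pos)
  qed
qed

lemma shape_i:
  assumes ein: "einstein br g lam"
    and tt: "g t t = -1"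
    and fB: "finite B1" "finite B2" "finite B3"
    and n1: "\<And>b. b \<in> B1 \<Longrightarrow> g b b = 1" and n2: "\<And>b. b \<in> B2 \<Longrightarrow> g b b = 1" and n3: "\<And>b. b \<in> B3 \<Longrightarrow> g b b = 1"
    and o1: "\<And>b c. b \<in> B1 \<Longrightarrow> c \<in> B1 \<Longrightarrow> b \<noteq> c \<Longrightarrow> g b c = 0"
    and o2: "\<And>b c. b \<in> B2 \<Longrightarrow> c \<in> B2 \<Longrightarrow> b \<noteq> c \<Longrightarrow> g b c = 0"
    and o3: "\<And>b c. b \<in> B3 \<Longrightarrow> c \<in> B3 \<Longrightarrow> b \<noteq> c \<Longrightarrow> g b c = 0"
    and x12: "\<And>b c. b \<in> B1 \<Longrightarrow> c \<in> B2 \<Longrightarrow> g b c = 0"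
    and x13: "\<And>b c. b \<in> B1 \<Longrightarrow> c \<in> B3 \<Longrightarrow> g b c = 0"
    and x23: "\<And>b c. b \<in> B2 \<Longrightarrow> c \<in> B3 \<Longrightarrow> g b c = 0"
    and tB: "\<And>b. b \<in> B1 \<union> B2 \<union> B3 \<Longrightarrow> g t b = 0"
    and cmp: "\<And>x. g x t = 0 \<Longrightarrow> (\<And>b. b \<in> B1 \<union> B2 \<union> B3 \<Longrightarrow> g x b = 0) \<Longrightarrow> x = 0"
    and c1: "\<And>a x y. a \<in> B1 \<Longrightarrow> g (br x y) a = 0"
    and c2: "\<And>c. g (br t c) t = 0"
    and c3: "\<And>a b c. a \<in> B2 \<Longrightarrow> b \<in> B2 \<Longrightarrow> g (br b c) a = 0"
    and c4: "\<And>b c. b \<in> B2 \<Longrightarrow> c \<in> B2 \<Longrightarrow> br b c = 0"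
    and c5: "\<And>b c. b \<in> B3 \<Longrightarrow> br b c = 0"
    and tr2: "\<And>x y a. a \<in> insert t (B1 \<union> B2 \<union> B3) \<Longrightarrow> g (br x (br y a)) a = 0"
  shows "0 \<le> lam"
proof -
  define I where "I = insert t (B1 \<union> B2 \<union> B3)"
  define w where "w a = (if a = t then 2 else if a \<in> B1 then 1 else if a \<in> B2 then 2 else (3::real))" for a
  define s where "s a = (if a = t then -1 else (1::real))" for a
  have tn1: "t \<notin> B1" using tB n1 tt by force
  have tn2: "t \<notin> B2" using tB n2 tt by force
  have tn3: "t \<notin> B3" using tB n3 tt by force
  have d12: "b \<notin> B2" if "b \<in> B1" for b using x12[OF that] n1[OF that] by force
  have d13: "b \<notin> B3" if "b \<in> B1" for b using x13[OF that] n1[OF that] by force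
  have d23: "b \<notin> B3" if "b \<in> B2" for b using x23[OF that] n2[OF that] by force
  have gs: "g b c = g c b" for b c by (rule gsym)
  have br3: "br c b = 0" if "b \<in> B3" for b c using c5[OF that, of c] br_anti[of c b] by simp
  show ?thesis
  proof (rule cert_orth[OF ein, of I s w])
    show "finite I" unfolding I_def using fB by simp
  next
    fix a assume "a \<in> I" then show "g a a = s a" unfolding I_def s_def using tt n1 n2 n3 tn1 tn2 tn3 by auto
  next
    fix a assume "a \<in> I" then show "s a = 1 \<or> s a = -1" unfolding s_def by auto
  next
    fix a b assume aI: "a \<in> I" and bI: "b \<in> I" and ab: "a \<noteq> b"
    show "g a b = 0"
      using aI bI ab tB o1 o2 o3 x12 x13 x23 gs unfolding I_def by (metis Un_iff insert_iff)
  next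
    fix x assume h: "\<And>a. a \<in> I \<Longrightarrow> g x a = 0"
    show "x = 0" by (rule cmp) (use h in \<open>auto simp: I_def\<close>)
  next
    fix z a assume aI: "a \<in> I"
    show "g (br z a) a = 0"
    proof -
      consider "a = t" | "a \<in> B1" | "a \<in> B2" | "a \<in> B3" using aI unfolding I_def by auto
      then show ?thesis
      proof cases
        case 1 then show ?thesis using c2[of z] br_anti[of z t] by simp
      next
        case 2 then show ?thesis by (rule c1)
      next
        case 3 then show ?thesis using c3[OF 3 3, of z] br_anti[of z a] by simp
      next
        case 4 then show ?thesis using br3 by simp
      qed
    qed
  next
    fix x y a assume "a \<in> I" then show "g (br x (br y a)) a = 0" unfolding I_def by (rule tr2)
  next
    fix a b c assume aI: "a \<in> I" and bI: "b \<in> I" and cI: "c \<in> I"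
      and neg: "(w a - w b - w c) * (s a * s b * s c) < 0"
    have wv: "w x = (if x = t then 2 else if x \<in> B1 then 1 else if x \<in> B2 then 2 else 3)" for x
      unfolding w_def ..
    have w1: "1 \<le> w x" for x unfolding w_def by auto
    consider "a = t" | "a \<in> B1" | "a \<in> B2" | "a \<in> B3" using aI unfolding I_def by auto
    then show "g (br b c) a = 0"
    proof cases
      case 1
      show ?thesis
      proof (cases "b = t")
        case True then show ?thesis using 1 c2[of c] by simp
      next
        case bt: False
        show ?thesis
        proof (cases "c = t")
          case True then show ?thesis using 1 c2[of b] br_anti[of b t] by simp
        next
          case False
          have "(w a - w b - w c) * (s a * s b * s c) = w b + w c - 2" using 1 bt False unfolding s_def w_def by simp
          then show ?thesis using neg w1[of b] w1[of c] by simp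
        qed
      qed
    next
      case 2 then show ?thesis by (rule c1)
    next
      case 3
      have at: "a \<noteq> t" using 3 tn2 by auto
      have a1: "a \<notin> B1" using 3 d12 by auto
      show ?thesis
      proof (cases "b \<in> B2 \<or> c \<in> B2 \<or> b \<in> B3 \<or> c \<in> B3")
        case True
        have r1: ?thesis if "b \<in> B2" using c3[OF 3 that] by simp
        have r2: ?thesis if "c \<in> B2" using c3[OF 3 that, of b] br_anti[of b c] by simp
        have r3: ?thesis if "b \<in> B3" using c5[OF that] by simp
        have r4: ?thesis if "c \<in> B3" using br3[OF that] by simp
        from True r1 r2 r3 r4 show ?thesis by blast
      next
        case False
        then have bb: "b = t \<or> b \<in> B1" and cc: "c = t \<or> c \<in> B1" using bI cI unfolding I_def by auto
        show ?thesis
        proof (cases "b = t \<and> c = t")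
          case True then show ?thesis by simp
        next
          case nt: False
          have "(w a - w b - w c) * (s a * s b * s c) \<ge> 0"
            using bb cc nt at a1 3 tn1 unfolding w_def s_def by auto
          then show ?thesis using neg by simp
        qed
      qed
    next
      case 4
      have at: "a \<noteq> t" using 4 tn3 by auto
      have a12: "a \<notin> B1" "a \<notin> B2" using 4 d13 d23 by auto
      show ?thesis
      proof (cases "b \<in> B3 \<or> c \<in> B3 \<or> (b \<in> B2 \<and> c \<in> B2) \<or> (b = t \<and> c = t)")
        case True
        then show ?thesis using c4 c5 br3 by auto
      next
        case False
        then have bb: "b = t \<or> b \<in> B1 \<or> b \<in> B2" and cc: "c = t \<or> c \<in> B1 \<or> c \<in> B2"
          and nb: "\<not> (b \<in> B2 \<and> c \<in> B2)" and nt: "\<not> (b = t \<and> c = t)"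
          using bI cI unfolding I_def by auto
        have "(w a - w b - w c) * (s a * s b * s c) \<ge> 0"
          using bb cc nb nt at a12 4 tn1 tn2 d12 unfolding w_def s_def by auto
        then show ?thesis using neg by simp
      qed
    qed
  next
    have "t \<in> I" unfolding I_def by simp
    have fI: "finite I" unfolding I_def using fB by simp
    have "0 < w t" unfolding w_def by simp
    moreover have "(\<Sum>a\<in>I. w a) = w t + (\<Sum>a\<in>I - {t}. w a)"
      using fI \<open>t \<in> I\<close> by (simp add: sum.remove)
    moreover have "0 \<le> (\<Sum>a\<in>I - {t}. w a)" by (rule sum_nonneg) (simp add: w_def)
    ultimately show "0 < (\<Sum>a\<in>I. w a)" by simp
  qed
qed

end

context lz begin

lemma shape_ii:
  assumes ein: "einstein br g lam"
    and nn: "g n n = 0" and mm: "g m m = 0" and nm: "g n m = 1"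
    and fB: "finite B1" "finite B2" "finite B3"
    and n1: "\<And>b. b \<in> B1 \<Longrightarrow> g b b = 1" and n2: "\<And>b. b \<in> B2 \<Longrightarrow> g b b = 1" and n3: "\<And>b. b \<in> B3 \<Longrightarrow> g b b = 1"
    and o1: "\<And>b c. b \<in> B1 \<Longrightarrow> c \<in> B1 \<Longrightarrow> b \<noteq> c \<Longrightarrow> g b c = 0"
    and o2: "\<And>b c. b \<in> B2 \<Longrightarrow> c \<in> B2 \<Longrightarrow> b \<noteq> c \<Longrightarrow> g b c = 0"
    and o3: "\<And>b c. b \<in> B3 \<Longrightarrow> c \<in> B3 \<Longrightarrow> b \<noteq> c \<Longrightarrow> g b c = 0"
    and x12: "\<And>b c. b \<in> B1 \<Longrightarrow> c \<in> B2 \<Longrightarrow> g b c = 0"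
    and x13: "\<And>b c. b \<in> B1 \<Longrightarrow> c \<in> B3 \<Longrightarrow> g b c = 0"
    and x23: "\<And>b c. b \<in> B2 \<Longrightarrow> c \<in> B3 \<Longrightarrow> g b c = 0"
    and nB: "\<And>b. b \<in> B1 \<union> B2 \<union> B3 \<Longrightarrow> g n b = 0"
    and mB: "\<And>b. b \<in> B1 \<union> B2 \<union> B3 \<Longrightarrow> g m b = 0"
    and cmp: "\<And>x. g x n = 0 \<Longrightarrow> g x m = 0 \<Longrightarrow> (\<And>b. b \<in> B1 \<union> B2 \<union> B3 \<Longrightarrow> g x b = 0) \<Longrightarrow> x = 0"
    and h1: "\<And>a x y. a \<in> B1 \<Longrightarrow> g (br x y) a = 0"
    and h2: "\<And>u c v. u \<in> insert n B2 \<Longrightarrow> v \<in> {n, m} \<union> B1 \<union> B2 \<Longrightarrow> g (br u c) v = 0"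
    and h4: "\<And>u u'. u \<in> insert n B2 \<Longrightarrow> u' \<in> insert n B2 \<Longrightarrow> br u u' = 0"
    and h5: "\<And>b c. b \<in> B3 \<Longrightarrow> br b c = 0"
    and h6: "\<And>z. g (br z m) n = 0"
    and k1: "\<And>x y a. a \<in> B1 \<union> B2 \<union> B3 \<Longrightarrow> g (br x (br y a)) a = 0"
    and k2: "\<And>x y. g (br x (br y n)) m = 0" and k3: "\<And>x y. g (br x (br y m)) n = 0"
  shows "0 \<le> lam"
proof -
  define I where "I = {n, m} \<union> B1 \<union> B2 \<union> B3"
  define fd where "fd a = (if a = n then m else if a = m then n else a)" for a
  define w where "w a = (if a = n \<or> a = m then 2 else if a \<in> B1 then 1 else if a \<in> B2 then 2 else (3::real))" for a
  have gs: "g b c = g c b" for b c by (rule gsym)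
  have nm': "n \<noteq> m" using nn nm by auto
  have nB': "n \<notin> B1 \<union> B2 \<union> B3" using nn n1 n2 n3 by force
  have mB': "m \<notin> B1 \<union> B2 \<union> B3" using mm n1 n2 n3 by force
  have d12: "b \<notin> B2" if "b \<in> B1" for b using x12[OF that] n1[OF that] by force
  have d13: "b \<notin> B3" if "b \<in> B1" for b using x13[OF that] n1[OF that] by force
  have d23: "b \<notin> B3" if "b \<in> B2" for b using x23[OF that] n2[OF that] by force
  have mB2: "g b m = 0" if "b \<in> B1 \<union> B2 \<union> B3" for b using mB[OF that] gs[of m b] by simp
  have nB2: "g b n = 0" if "b \<in> B1 \<union> B2 \<union> B3" for b using nB[OF that] gs[of n b] by simp
  have fdn: "fd n = m" and fdm: "fd m = n" unfolding fd_def using nm' by auto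
  have fdB: "fd b = b" if "b \<in> B1 \<union> B2 \<union> B3" for b unfolding fd_def using that nB' mB' by auto
  have br3: "br c b = 0" if "b \<in> B3" for b c using h5[OF that, of c] br_anti[of c b] by simp
  have fin: "finite I" unfolding I_def using fB by simp
  have fr: "frame I fd"
  proof (rule frame_biorth[OF fin])
    fix a b assume aI: "a \<in> I" and bI: "b \<in> I"
    show "g a (fd b) = (if a = b then 1 else 0)"
    proof -
      consider "b = n" | "b = m" | "b \<in> B1 \<union> B2 \<union> B3" using bI unfolding I_def by auto
      then show ?thesis
      proof cases
        case 1
        then show ?thesis using aI nm nn mm mB2 nB' gs[of n m] unfolding I_def by (auto simp: fdn)
      next
        case 2
        then show ?thesis using aI nm nn nB2 mB' nm' gs[of n m] unfolding I_def by (auto simp: fdm)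
      next
        case 3
        have "g a b = (if a = b then 1 else 0)"
          using aI 3 nB mB gs n1 n2 n3 o1 o2 o3 x12 x13 x23 unfolding I_def
          by (auto, (metis gs)+)
        then show ?thesis using fdB[OF 3] by simp
      qed
    qed
  next
    fix x assume h: "\<And>a. a \<in> I \<Longrightarrow> g x (fd a) = 0"
    show "x = 0"
    proof (rule cmp)
      show "g x n = 0" using h[of m] fdm unfolding I_def by simp
      show "g x m = 0" using h[of n] fdn unfolding I_def by simp
      fix b assume "b \<in> B1 \<union> B2 \<union> B3" then show "g x b = 0" using h[of b] fdB unfolding I_def by auto
    qed
  qed
  show ?thesis
  proof (rule cert[OF ein fr, of w])
    fix a assume aI: "a \<in> I"
    then show "g a (fd a) = 1" unfolding I_def using nm gs[of m n] fdn fdm fdB n1 n2 n3 by auto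
  next
    fix z a assume aI: "a \<in> I"
    consider "a = n" | "a = m" | "a \<in> B1" | "a \<in> B2" | "a \<in> B3" using aI unfolding I_def by auto
    then show "g (br z a) (fd a) = 0"
    proof cases
      case 1 then show ?thesis using h2[where u=n and c=z and v=m] br_anti[of z n] fdn by simp
    next
      case 2 then show ?thesis using h6[of z] fdm by simp
    next
      case 3 then show ?thesis using h1[OF 3] fdB by simp
    next
      case 4 then show ?thesis using h2[where u=a and c=z and v=a] br_anti[of z a] fdB by simp
    next
      case 5 then show ?thesis using br3[OF 5] by simp
    qed
  next
    fix x y a assume aI: "a \<in> I"
    consider "a = n" | "a = m" | "a \<in> B1 \<union> B2 \<union> B3" using aI unfolding I_def by auto
    then show "g (br x (br y a)) (fd a) = 0"
    proof cases
      case 1 then show ?thesis using k2 fdn by simp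
    next
      case 2 then show ?thesis using k3 fdm by simp
    next
      case 3 then show ?thesis using k1[OF 3] fdB[OF 3] by simp
    qed
  next
    fix a b c assume aI: "a \<in> I" and bI: "b \<in> I" and cI: "c \<in> I"
    let ?T = "(w a - w b - w c) * (g (br b c) (fd a) * g (br (fd b) (fd c)) a)"
    have V0fd: "fd v \<in> {n, m} \<union> B1 \<union> B2" if "v \<in> {n, m} \<union> B1 \<union> B2" for v
      using that fdn fdm fdB by auto
    show "0 \<le> ?T"
    proof (cases "b \<in> B3 \<or> c \<in> B3")
      case True then show ?thesis using h5 br3 by auto
    next
      case False
      then have bV: "b \<in> {n, m} \<union> B1 \<union> B2" and cV: "c \<in> {n, m} \<union> B1 \<union> B2" using bI cI unfolding I_def by auto
      show ?thesis
      proof (cases "a \<in> B3")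
        case False
        then have aV: "a \<in> {n, m} \<union> B1 \<union> B2" using aI unfolding I_def by auto
        show ?thesis
        proof (cases "b \<in> insert n B2 \<or> c \<in> insert n B2")
          case True
          have "g (br b c) (fd a) = 0"
          proof (cases "b \<in> insert n B2")
            case True then show ?thesis using h2[OF True V0fd[OF aV]] by simp
          next
            case False
            then have "c \<in> insert n B2" using \<open>b \<in> insert n B2 \<or> c \<in> insert n B2\<close> by simp
            then show ?thesis using h2[OF _ V0fd[OF aV], of c b] br_anti[of b c] by simp
          qed
          then show ?thesis by simp
        next
          case nU: False
          then have bb: "b = m \<or> b \<in> B1" and cc: "c = m \<or> c \<in> B1" using bV cV by auto
          show ?thesis
          proof (cases "a \<in> B1")
            case True then show ?thesis using h1[OF True] fdB[of a] by simp
          next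
            case aN1: False
            have wa: "w a = 2" using aV aN1 unfolding w_def by auto
            consider "b = m \<and> c = m" | "b = m \<and> c \<in> B1" | "b \<in> B1 \<and> c = m" | "b \<in> B1 \<and> c \<in> B1"
              using bb cc by auto
            then show ?thesis
            proof cases
              case 1 then show ?thesis by simp
            next
              case 2
              have "g (br (fd b) (fd c)) a = 0" using 2 fdm fdB[of c] h2[where u=n and c=c and v=a] aV by simp
              then show ?thesis by simp
            next
              case 3
              have "g (br (fd b) (fd c)) a = 0" using 3 fdm fdB[of b] h2[where u=n and c=b and v=a] aV br_anti[of b n] by simp
              then show ?thesis by simp
            next
              case 4
              have "w b = 1" "w c = 1" using 4 nB' mB' unfolding w_def by auto
              then show ?thesis using wa by simp
            qed
          qed
        qed
      next
        case aB3: True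
        have fa: "fd a = a" using fdB aB3 by simp
        have wa: "w a = 3" using aB3 nB' mB' d13 d23 unfolding w_def by auto
        show ?thesis
        proof (cases "b \<in> B1 \<or> c \<in> B1")
          case True
          show ?thesis
          proof (cases "b \<in> B1 \<and> c \<in> B1")
            case True
            have "w b = 1" "w c = 1" using True nB' mB' unfolding w_def by auto
            moreover have "fd b = b" "fd c = c" using True fdB by auto
            ultimately show ?thesis using wa fa by simp
          next
            case False
            have "w b + w c = 3" using \<open>b \<in> B1 \<or> c \<in> B1\<close> False bV cV nB' mB' d12 unfolding w_def by auto
            then have "w a - w b - w c = 0" using wa by simp
            then show ?thesis by simp
          qed
        next
          case False
          then have bb: "b \<in> {n, m} \<union> B2" and cc: "c \<in> {n, m} \<union> B2" using bV cV by auto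
          have wbc: "w b = 2" "w c = 2" using bb cc d12 unfolding w_def by auto
          have "g (br b c) (fd a) * g (br (fd b) (fd c)) a \<le> 0"
          proof -
            consider "b = n \<and> c = m" | "b = m \<and> c = n" | "b \<in> insert n B2 \<and> c \<in> insert n B2"
              | "b = m \<and> c = m" | "b = m \<and> c \<in> B2" | "b \<in> B2 \<and> c = m"
              using bb cc by auto
            then show ?thesis
            proof cases
              case 1
              then show ?thesis using fa fdn fdm br_anti[of m n] by simp
            next
              case 2
              then show ?thesis using fa fdn fdm br_anti[of n m] by simp
            next
              case 3 then show ?thesis using h4 by simp
            next
              case 4 then show ?thesis by simp
            next
              case 5 then show ?thesis using fdm fdB[of c] h4[of n c] by simp
            next
              case 6 then show ?thesis using fdm fdB[of b] h4[of b n] by simp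
            qed
          qed
          then show ?thesis using wa wbc by (simp add: mult_le_0_iff)
        qed
      qed
    qed
  next
    have "n \<in> I" unfolding I_def by simp
    have "0 < w n" unfolding w_def by simp
    moreover have "(\<Sum>a\<in>I. w a) = w n + (\<Sum>a\<in>I - {n}. w a)"
      using fin \<open>n \<in> I\<close> by (simp add: sum.remove)
    moreover have "0 \<le> (\<Sum>a\<in>I - {n}. w a)" by (rule sum_nonneg) (simp add: w_def)
    ultimately show "0 < (\<Sum>a\<in>I. w a)" by simp
  qed
qed

end

locale lor3 = lor +
  fixes lam :: real
  assumes l3: "lcs br 3 = {0}" and nd: "nondegenerate_on g (center br)" and ein: "einstein br g lam"
begin

definition "Zc = center br"
definition "C1 = lcs br 1"
definition "C2 = lcs br 2"
definition "V = {v. \<forall>z\<in>Zc. g v z = 0}"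
definition "U = {u\<in>V. \<exists>c\<in>C1. c - u \<in> Zc}"

lemma lcs1: "lcs br 1 = span {br x y |x y. x \<in> UNIV}"
  using lcs.simps(2)[of br 0] by simp
lemma lcs2: "lcs br 2 = span {br x y |x y. x \<in> lcs br 1}"
  using lcs.simps(2)[of br 1] by (simp add: numeral_2_eq_2)
lemma lcs3: "lcs br 3 = span {br x y |x y. x \<in> lcs br 2}"
  using lcs.simps(2)[of br 2] by (simp add: numeral_3_eq_3 numeral_2_eq_2)

lemma f1: "br x y \<in> C1" unfolding C1_def lcs1 by (rule span_base) blast
lemma f2: "c \<in> C1 \<Longrightarrow> br c y \<in> C2" unfolding C2_def lcs2 C1_def by (rule span_base) blast
lemma f3: "c \<in> C2 \<Longrightarrow> br c y = 0"
proof -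
  assume "c \<in> C2"
  then have "br c y \<in> lcs br 3" unfolding lcs3 C2_def by (intro span_base) blast
  then show ?thesis using l3 by simp
qed
lemma Zc_iff: "z \<in> Zc \<longleftrightarrow> (\<forall>x. br z x = 0)" unfolding Zc_def center_def by simp
lemma ZcD: "z \<in> Zc \<Longrightarrow> br z x = 0" by (simp add: Zc_iff)
lemma ZcD2: "z \<in> Zc \<Longrightarrow> br x z = 0" using ZcD[of z x] br_anti[of x z] by simp
lemma f4: "c \<in> C2 \<Longrightarrow> c \<in> Zc" using f3 by (simp add: Zc_iff)
lemma f5: "c \<in> C1 \<Longrightarrow> br y c \<in> C2"
proof -
  assume "c \<in> C1"
  then have "br c y \<in> C2" by (rule f2)
  then have "- br c y \<in> C2" unfolding C2_def lcs2 by (rule span_neg)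
  then show ?thesis using br_anti[of y c] by simp
qed
lemma sub_Zc: "subspace Zc"
  unfolding subspace_def Zc_def center_def by simp
lemma sub_C1: "subspace C1" unfolding C1_def lcs1 by (rule subspace_span)
lemma sub_V: "subspace V" unfolding subspace_def V_def by simp
lemma f6: "c \<in> C1 \<Longrightarrow> c' \<in> C1 \<Longrightarrow> br c c' = 0"
proof -
  assume c: "c \<in> C1" and c': "c' \<in> C1"
  have "c \<in> span {br x y |x y. x \<in> UNIV}" using c unfolding C1_def lcs1 .
  then show "br c c' = 0"
  proof (induction rule: span_induct)
    case base
    show ?case unfolding subspace_def by simp
  next
    case (step v)
    then obtain x y where v: "v = br x y" by blast
    have j: "br x (br y c') + br y (br c' x) + br c' (br x y) = 0" by (rule jacobi)
    have "br y c' \<in> C2" using c' by (rule f5)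
    then have a1: "br x (br y c') = 0" using f4 ZcD2 by blast
    have "br c' x \<in> C2" using c' by (rule f2)
    then have a2: "br y (br c' x) = 0" using f4 ZcD2 by blast
    have "br c' (br x y) = 0" using j a1 a2 by simp
    then show ?case unfolding v using br_anti[of "br x y" c'] by simp
  qed
qed

lemma KZ: "br x (br y a) \<in> Zc"
proof -
  have "br y a \<in> C1" by (rule f1)
  then have "br x (br y a) \<in> C2" by (rule f5)
  then show ?thesis by (rule f4)
qed

lemma sub_U: "subspace U"
  unfolding subspace_def U_def
proof (intro conjI ballI allI)
  show "0 \<in> {u \<in> V. \<exists>c\<in>C1. c - u \<in> Zc}" using sub_V sub_C1 sub_Zc
    by (auto simp: subspace_0 intro!: bexI[of _ 0])
next
  fix x y assume x: "x \<in> {u \<in> V. \<exists>c\<in>C1. c - u \<in> Zc}" and y: "y \<in> {u \<in> V. \<exists>c\<in>C1. c - u \<in> Zc}"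
  then obtain c d where c: "c \<in> C1" "c - x \<in> Zc" and d: "d \<in> C1" "d - y \<in> Zc" by auto
  have e: "(c + d) - (x + y) = (c - x) + (d - y)" by (simp add: algebra_simps)
  have "(c - x) + (d - y) \<in> Zc" by (rule subspace_add[OF sub_Zc c(2) d(2)])
  then have "(c + d) - (x + y) \<in> Zc" by (simp only: e)
  moreover have "c + d \<in> C1" using c d sub_C1 by (simp add: subspace_add)
  moreover have "x + y \<in> V" using x y sub_V by (simp add: subspace_add)
  ultimately show "x + y \<in> {u \<in> V. \<exists>c\<in>C1. c - u \<in> Zc}" by blast
next
  fix r x assume x: "x \<in> {u \<in> V. \<exists>c\<in>C1. c - u \<in> Zc}"
  then obtain c where c: "c \<in> C1" "c - x \<in> Zc" by auto
  have "r *\<^sub>R c - r *\<^sub>R x = r *\<^sub>R (c - x)" by (simp add: algebra_simps)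
  then have "r *\<^sub>R c - r *\<^sub>R x \<in> Zc" using c sub_Zc by (simp add: subspace_scale)
  moreover have "r *\<^sub>R c \<in> C1" using c sub_C1 by (simp add: subspace_scale)
  moreover have "r *\<^sub>R x \<in> V" using x sub_V by (simp add: subspace_scale)
  ultimately show "r *\<^sub>R x \<in> {u \<in> V. \<exists>c\<in>C1. c - u \<in> Zc}" by blast
qed

lemma UV: "u \<in> U \<Longrightarrow> u \<in> V" unfolding U_def by simp

lemma UZ: "u \<in> U \<Longrightarrow> br u x \<in> Zc"
proof -
  assume "u \<in> U"
  then obtain c where c: "c \<in> C1" "c - u \<in> Zc" unfolding U_def by auto
  have "br u x = br c x - br (c - u) x" by simp
  also have "\<dots> = br c x" using ZcD[OF c(2)] by simp
  finally show ?thesis using f4[OF f2[OF c(1)]] by simp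
qed

lemma UZ2: "u \<in> U \<Longrightarrow> br x u \<in> Zc"
  using UZ[of u x] br_anti[of x u] sub_Zc by (simp add: subspace_neg)

lemma UU: "u \<in> U \<Longrightarrow> u' \<in> U \<Longrightarrow> br u u' = 0"
proof -
  assume "u \<in> U" "u' \<in> U"
  then obtain c c' where c: "c \<in> C1" "c - u \<in> Zc" and c': "c' \<in> C1" "c' - u' \<in> Zc" unfolding U_def by auto
  have "br u u' = br (c - (c - u)) (c' - (c' - u'))" by simp
  also have "\<dots> = br c c'" using ZcD[OF c(2)] ZcD2[OF c'(2)] ZcD[OF c(2)] by (simp add: ZcD ZcD2 c c')
  also have "\<dots> = 0" using f6 c(1) c'(1) by simp
  finally show ?thesis .
qed

lemma VZ: "v \<in> V \<Longrightarrow> z \<in> Zc \<Longrightarrow> g v z = 0" unfolding V_def by simp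
lemma VZ2: "v \<in> V \<Longrightarrow> z \<in> Zc \<Longrightarrow> g z v = 0" using VZ gsym by metis

lemma perpC1:
  assumes dec: "\<And>x. \<exists>z\<in>Zc. x - z \<in> V" and aV: "a \<in> V" and aU: "\<And>u. u \<in> U \<Longrightarrow> g u a = 0"
  shows "g (br x y) a = 0"
proof -
  obtain z where z: "z \<in> Zc" "br x y - z \<in> V" using dec by blast
  have "br x y - z \<in> U" unfolding U_def using z f1[of x y] by (auto intro!: bexI[of _ "br x y"])
  then have "g (br x y - z) a = 0" by (rule aU)
  moreover have "g z a = 0" using VZ2[OF aV z(1)] .
  ultimately show ?thesis by simp
qed

lemma KZ0: "a \<in> V \<Longrightarrow> g (br x (br y a)) a = 0" using VZ2[OF _ KZ] by simp

end

context lor3 begin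

lemma normalize_neg:
  assumes "g t0 t0 < 0" shows "g ((1 / sqrt (- g t0 t0)) *\<^sub>R t0) ((1 / sqrt (- g t0 t0)) *\<^sub>R t0) = -1"
proof -
  have p: "0 < - g t0 t0" using assms by simp
  have "g ((1 / sqrt (- g t0 t0)) *\<^sub>R t0) ((1 / sqrt (- g t0 t0)) *\<^sub>R t0) = g t0 t0 / (sqrt (- g t0 t0))^2"
    by (simp add: power2_eq_square)
  also have "\<dots> = -1" using p by simp
  finally show ?thesis .
qed

lemma zero_of_V: "x \<in> V \<Longrightarrow> g x x = 0 \<Longrightarrow> (\<And>v. v \<in> V \<Longrightarrow> v \<noteq> 0 \<Longrightarrow> 0 < g v v) \<Longrightarrow> x = 0"
  by force

lemma caseB: assumes t0Z: "t0 \<in> Zc" and t0n: "g t0 t0 < 0" shows "0 \<le> lam"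
proof -
  define t where "t = (1 / sqrt (- g t0 t0)) *\<^sub>R t0"
  have tt: "g t t = -1" unfolding t_def by (rule normalize_neg[OF t0n])
  have tZ: "t \<in> Zc" unfolding t_def using t0Z sub_Zc by (simp add: subspace_scale)
  define Zs where "Zs = {z \<in> Zc. g z t = 0}"
  have subZs: "subspace Zs" unfolding Zs_def using sub_Zc unfolding subspace_def by auto
  have pZs: "0 < g z z" if "z \<in> Zs" "z \<noteq> 0" for z
    using tl_perp[of t z] that tt unfolding Zs_def by simp
  obtain B3 where B3: "finite B3" "B3 \<subseteq> Zs" "Zs \<subseteq> span B3" "\<forall>b\<in>B3. g b b = 1"
      "\<forall>b\<in>B3. \<forall>c\<in>B3. b \<noteq> c \<longrightarrow> g b c = 0"
    using onb[OF subZs pZs] by blast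
  have B3Z: "b \<in> Zc" if "b \<in> B3" for b using B3(2) that unfolding Zs_def by auto
  have B3t: "g b t = 0" if "b \<in> B3" for b using B3(2) that unfolding Zs_def by auto
  have pV: "0 < g v v" if "v \<in> V" "v \<noteq> 0" for v
    using tl_perp[of t v] that tt VZ[OF that(1) tZ] by simp
  have orthZ: "x \<in> V" if xt: "g x t = 0" and xb: "\<And>b. b \<in> B3 \<Longrightarrow> g x b = 0" for x
    unfolding V_def
  proof (intro CollectI ballI)
    fix z assume zZ: "z \<in> Zc"
    have "z + g z t *\<^sub>R t \<in> Zs" unfolding Zs_def using zZ tZ sub_Zc tt
      by (simp add: subspace_add subspace_scale)
    then have "g x (z + g z t *\<^sub>R t) = 0" using g_span0[of B3 x] xb B3(3) by blast
    then show "g x z = 0" using xt by simp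
  qed
  have dec: "\<exists>z\<in>Zc. x - z \<in> V" for x
  proof -
    define x' where "x' = x + g x t *\<^sub>R t"
    define z where "z = - g x t *\<^sub>R t + (\<Sum>b\<in>B3. g x' b *\<^sub>R b)"
    have xz: "x - z = x' - (\<Sum>b\<in>B3. g x' b *\<^sub>R b)" unfolding z_def x'_def by simp
    have "(\<Sum>b\<in>B3. g x' b *\<^sub>R b) \<in> Zc"
      using B3Z sub_Zc by (intro subspace_sum) (auto simp: subspace_scale)
    then have zZ: "z \<in> Zc" unfolding z_def using tZ sub_Zc by (simp add: subspace_diff subspace_scale)
    have "g (x - z) b = 0" if "b \<in> B3" for b
      unfolding xz using proj_orth[of B3 b x'] B3 that by simp
    moreover have "g (x - z) t = 0"
    proof -
      have "(\<Sum>b\<in>B3. g x' b * g b t) = 0" using B3t by simp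
      then show ?thesis unfolding xz x'_def using tt by simp
    qed
    ultimately have "x - z \<in> V" using orthZ by blast
    then show ?thesis using zZ by blast
  qed
  have pU: "0 < g u u" if "u \<in> U" "u \<noteq> 0" for u using pV UV that by blast
  obtain B2 where B2: "finite B2" "B2 \<subseteq> U" "U \<subseteq> span B2" "\<forall>b\<in>B2. g b b = 1"
      "\<forall>b\<in>B2. \<forall>c\<in>B2. b \<noteq> c \<longrightarrow> g b c = 0"
    using onb[OF sub_U pU] by blast
  define W where "W = {w \<in> V. \<forall>u\<in>U. g w u = 0}"
  have subW: "subspace W" unfolding W_def using sub_V unfolding subspace_def by auto
  have pW: "0 < g w w" if "w \<in> W" "w \<noteq> 0" for w using pV that unfolding W_def by blast
  obtain B1 where B1: "finite B1" "B1 \<subseteq> W" "W \<subseteq> span B1" "\<forall>b\<in>B1. g b b = 1"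
      "\<forall>b\<in>B1. \<forall>c\<in>B1. b \<noteq> c \<longrightarrow> g b c = 0"
    using onb[OF subW pW] by blast
  have B1V: "b \<in> V" if "b \<in> B1" for b using B1(2) that unfolding W_def by auto
  have B1U: "g u b = 0" if "b \<in> B1" "u \<in> U" for b u
    using B1(2) that gsym unfolding W_def by (metis (mono_tags, lifting) mem_Collect_eq subsetD)
  have B2U: "b \<in> U" if "b \<in> B2" for b using B2(2) that by auto
  show ?thesis
  proof (rule shape_i[OF ein tt B1(1) B2(1) B3(1)])
    show "\<And>b. b \<in> B1 \<Longrightarrow> g b b = 1" using B1(4) by auto
    show "\<And>b. b \<in> B2 \<Longrightarrow> g b b = 1" using B2(4) by auto
    show "\<And>b. b \<in> B3 \<Longrightarrow> g b b = 1" using B3(4) by auto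
    show "\<And>b c. b \<in> B1 \<Longrightarrow> c \<in> B1 \<Longrightarrow> b \<noteq> c \<Longrightarrow> g b c = 0" using B1(5) by auto
    show "\<And>b c. b \<in> B2 \<Longrightarrow> c \<in> B2 \<Longrightarrow> b \<noteq> c \<Longrightarrow> g b c = 0" using B2(5) by auto
    show "\<And>b c. b \<in> B3 \<Longrightarrow> c \<in> B3 \<Longrightarrow> b \<noteq> c \<Longrightarrow> g b c = 0" using B3(5) by auto
    show "\<And>b c. b \<in> B1 \<Longrightarrow> c \<in> B2 \<Longrightarrow> g b c = 0" using B1U B2U gsym by metis
    show "\<And>b c. b \<in> B1 \<Longrightarrow> c \<in> B3 \<Longrightarrow> g b c = 0" using B1V B3Z VZ by blast
    show "\<And>b c. b \<in> B2 \<Longrightarrow> c \<in> B3 \<Longrightarrow> g b c = 0" using B2U UV B3Z VZ by blast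
    show "\<And>b. b \<in> B1 \<union> B2 \<union> B3 \<Longrightarrow> g t b = 0"
      using B1V B2U UV VZ2[OF _ tZ] B3t gsym by (metis Un_iff)
  next
    fix x assume xt: "g x t = 0" and xb: "\<And>b. b \<in> B1 \<union> B2 \<union> B3 \<Longrightarrow> g x b = 0"
    have xV: "x \<in> V" using orthZ[OF xt] xb by blast
    have "g x u = 0" if "u \<in> U" for u using g_span0[of B2 x u] xb B2(3) that by blast
    then have "x \<in> W" unfolding W_def using xV by blast
    then have "g x x = 0" using g_span0[of B1 x x] xb B1(3) by blast
    then show "x = 0" using pV xV by force
  next
    fix a x y assume "a \<in> B1" then show "g (br x y) a = 0"
      using perpC1[OF dec B1V B1U] by blast
  next
    fix c show "g (br t c) t = 0" using ZcD[OF tZ] by simp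
  next
    fix a b c assume "a \<in> B2" "b \<in> B2" then show "g (br b c) a = 0"
      using VZ2[OF UV[OF B2U] UZ[OF B2U]] by blast
  next
    fix b c assume "b \<in> B2" "c \<in> B2" then show "br b c = 0" using UU B2U by blast
  next
    fix b c assume "b \<in> B3" then show "br b c = 0" using ZcD B3Z by blast
  next
    fix x y a assume "a \<in> insert t (B1 \<union> B2 \<union> B3)"
    then consider "a \<in> Zc" | "a \<in> V" using tZ B3Z B1V B2U UV by blast
    then show "g (br x (br y a)) a = 0"
    proof cases
      case 1 then show ?thesis using ZcD2 by simp
    next
      case 2 then show ?thesis by (rule KZ0)
    qed
  qed
qed

end

locale lorA = lor3 +
  fixes B3
  assumes hZ: "\<And>z. z \<in> Zc \<Longrightarrow> 0 \<le> g z z"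
    and B3fin: "finite B3" and B3Z: "\<And>b. b \<in> B3 \<Longrightarrow> b \<in> Zc" and ZB3: "Zc \<subseteq> span B3"
    and B3n: "\<And>b. b \<in> B3 \<Longrightarrow> g b b = 1" and B3o: "\<And>b c. b \<in> B3 \<Longrightarrow> c \<in> B3 \<Longrightarrow> b \<noteq> c \<Longrightarrow> g b c = 0"
begin

lemma orthZ: assumes "\<And>b. b \<in> B3 \<Longrightarrow> g x b = 0" shows "x \<in> V"
  unfolding V_def using g_span0[of B3 x] assms ZB3 by blast

lemma projB3: "(\<Sum>b\<in>B3. g x b *\<^sub>R b) \<in> Zc"
  using B3Z sub_Zc by (intro subspace_sum) (auto simp: subspace_scale)

lemma dec: "\<exists>z\<in>Zc. x - z \<in> V"
proof -
  have "x - (\<Sum>b\<in>B3. g x b *\<^sub>R b) \<in> V"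
    by (rule orthZ) (use proj_orth[of B3 _ x] B3fin B3n B3o in auto)
  then show ?thesis using projB3 by blast
qed

lemma ex_t0: "\<exists>t0\<in>V. g t0 t0 < 0"
proof -
  define p where "p = (\<Sum>b\<in>B3. g e0 b *\<^sub>R b)"
  have pZ: "p \<in> Zc" unfolding p_def by (rule projB3)
  have tV: "e0 - p \<in> V" unfolding p_def
    by (rule orthZ) (use proj_orth[of B3 _ e0] B3fin B3n B3o in auto)
  have "g (e0 - p) p = 0" using VZ[OF tV pZ] .
  then have "g e0 e0 = g (e0 - p) (e0 - p) + g p p"
    using gsym[of p "e0 - p"] by (simp add: algebra_simps)
  then have "g (e0 - p) (e0 - p) < 0" using e0neg hZ[OF pZ] by simp
  then show ?thesis using tV by blast
qed

lemma orthU_B: assumes "U \<subseteq> span B" "\<And>b. b \<in> B \<Longrightarrow> g x b = 0" "u \<in> U" shows "g x u = 0"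
  using g_span0[of B x u] assms by blast

lemma caseA2: assumes u0U: "u0 \<in> U" and u0n: "g u0 u0 < 0" shows "0 \<le> lam"
proof -
  define t where "t = (1 / sqrt (- g u0 u0)) *\<^sub>R u0"
  have tt: "g t t = -1" unfolding t_def by (rule normalize_neg[OF u0n])
  have tU: "t \<in> U" unfolding t_def using u0U sub_U by (simp add: subspace_scale)
  have tV: "t \<in> V" using UV[OF tU] .
  define Us where "Us = {x \<in> U. g x t = 0}"
  have subUs: "subspace Us" unfolding Us_def using sub_U unfolding subspace_def by auto
  have pUs: "0 < g z z" if "z \<in> Us" "z \<noteq> 0" for z
    using tl_perp[of t z] that tt unfolding Us_def by simp
  obtain B2 where B2: "finite B2" "B2 \<subseteq> Us" "Us \<subseteq> span B2" "\<forall>b\<in>B2. g b b = 1"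
      "\<forall>b\<in>B2. \<forall>c\<in>B2. b \<noteq> c \<longrightarrow> g b c = 0"
    using onb[OF subUs pUs] by blast
  have B2U: "b \<in> U" if "b \<in> B2" for b using B2(2) that unfolding Us_def by auto
  have B2t: "g b t = 0" if "b \<in> B2" for b using B2(2) that unfolding Us_def by auto
  define W where "W = {w \<in> V. \<forall>u\<in>U. g w u = 0}"
  have subW: "subspace W" unfolding W_def using sub_V unfolding subspace_def by auto
  have pW: "0 < g w w" if "w \<in> W" "w \<noteq> 0" for w
    using tl_perp[of t w] that tt tU unfolding W_def by simp
  obtain B1 where B1: "finite B1" "B1 \<subseteq> W" "W \<subseteq> span B1" "\<forall>b\<in>B1. g b b = 1"
      "\<forall>b\<in>B1. \<forall>c\<in>B1. b \<noteq> c \<longrightarrow> g b c = 0"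
    using onb[OF subW pW] by blast
  have B1V: "b \<in> V" if "b \<in> B1" for b using B1(2) that unfolding W_def by auto
  have B1U: "g u b = 0" if "b \<in> B1" "u \<in> U" for b u
    using B1(2) that gsym unfolding W_def by (metis (mono_tags, lifting) mem_Collect_eq subsetD)
  show ?thesis
  proof (rule shape_i[OF ein tt B1(1) B2(1) B3fin])
    show "\<And>b. b \<in> B1 \<Longrightarrow> g b b = 1" using B1(4) by auto
    show "\<And>b. b \<in> B2 \<Longrightarrow> g b b = 1" using B2(4) by auto
    show "\<And>b. b \<in> B3 \<Longrightarrow> g b b = 1" using B3n by auto
    show "\<And>b c. b \<in> B1 \<Longrightarrow> c \<in> B1 \<Longrightarrow> b \<noteq> c \<Longrightarrow> g b c = 0" using B1(5) by auto
    show "\<And>b c. b \<in> B2 \<Longrightarrow> c \<in> B2 \<Longrightarrow> b \<noteq> c \<Longrightarrow> g b c = 0" using B2(5) by auto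
    show "\<And>b c. b \<in> B3 \<Longrightarrow> c \<in> B3 \<Longrightarrow> b \<noteq> c \<Longrightarrow> g b c = 0" using B3o by auto
    show "\<And>b c. b \<in> B1 \<Longrightarrow> c \<in> B2 \<Longrightarrow> g b c = 0" using B1U B2U gsym by metis
    show "\<And>b c. b \<in> B1 \<Longrightarrow> c \<in> B3 \<Longrightarrow> g b c = 0" using B1V B3Z VZ by blast
    show "\<And>b c. b \<in> B2 \<Longrightarrow> c \<in> B3 \<Longrightarrow> g b c = 0" using B2U UV B3Z VZ by blast
    show "\<And>b. b \<in> B1 \<union> B2 \<union> B3 \<Longrightarrow> g t b = 0"
      using B1U[OF _ tU] B2t VZ[OF tV B3Z] gsym by (metis Un_iff)
  next
    fix x assume xt: "g x t = 0" and xb: "\<And>b. b \<in> B1 \<union> B2 \<union> B3 \<Longrightarrow> g x b = 0"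
    have xV: "x \<in> V" using orthZ xb by blast
    have "g x u = 0" if uU: "u \<in> U" for u
    proof -
      have "u + g u t *\<^sub>R t \<in> Us" unfolding Us_def using uU tU sub_U tt
        by (simp add: subspace_add subspace_scale)
      then have "g x (u + g u t *\<^sub>R t) = 0" using g_span0[of B2 x] xb B2(3) by blast
      then show ?thesis using xt by simp
    qed
    then have "x \<in> W" unfolding W_def using xV by blast
    moreover have "g x x = 0" using g_span0[of B1 x x] xb B1(3) \<open>x \<in> W\<close> by blast
    ultimately show "x = 0" using pW by force
  next
    fix a x y assume "a \<in> B1" then show "g (br x y) a = 0"
      using perpC1[OF dec B1V B1U] by blast
  next
    fix c show "g (br t c) t = 0" using VZ2[OF tV UZ[OF tU]] .
  next
    fix a b c assume "a \<in> B2" "b \<in> B2" then show "g (br b c) a = 0"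
      using VZ2[OF UV[OF B2U] UZ[OF B2U]] by blast
  next
    fix b c assume "b \<in> B2" "c \<in> B2" then show "br b c = 0" using UU B2U by blast
  next
    fix b c assume "b \<in> B3" then show "br b c = 0" using ZcD B3Z by blast
  next
    fix x y a assume "a \<in> insert t (B1 \<union> B2 \<union> B3)"
    then consider "a \<in> Zc" | "a \<in> V" using tV B3Z B1V B2U UV by blast
    then show "g (br x (br y a)) a = 0"
    proof cases
      case 1 then show ?thesis using ZcD2 by simp
    next
      case 2 then show ?thesis by (rule KZ0)
    qed
  qed
qed

lemma caseA1: assumes pU: "\<And>u. u \<in> U \<Longrightarrow> u \<noteq> 0 \<Longrightarrow> 0 < g u u" shows "0 \<le> lam"
proof -
  obtain B2 where B2: "finite B2" "B2 \<subseteq> U" "U \<subseteq> span B2" "\<forall>b\<in>B2. g b b = 1"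
      "\<forall>b\<in>B2. \<forall>c\<in>B2. b \<noteq> c \<longrightarrow> g b c = 0"
    using onb[OF sub_U pU] by blast
  have B2U: "b \<in> U" if "b \<in> B2" for b using B2(2) that by auto
  obtain t0 where t0V: "t0 \<in> V" and t0n: "g t0 t0 < 0" using ex_t0 by blast
  define q where "q = (\<Sum>b\<in>B2. g t0 b *\<^sub>R b)"
  have qU: "q \<in> U" unfolding q_def using B2U sub_U by (intro subspace_sum) (auto simp: subspace_scale)
  have t1b: "g (t0 - q) b = 0" if "b \<in> B2" for b
    unfolding q_def using proj_orth[of B2 b t0] B2 that by simp
  have t1U: "g (t0 - q) u = 0" if "u \<in> U" for u using orthU_B[OF B2(3) t1b that] .
  have t1V: "t0 - q \<in> V" using t0V UV[OF qU] sub_V by (simp add: subspace_diff)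
  have "g t0 t0 = g (t0 - q) (t0 - q) + g q q"
    using t1U[OF qU] gsym[of q "t0 - q"] by (simp add: algebra_simps)
  moreover have "0 \<le> g q q" using pU[OF qU] by (cases "q = 0") (auto simp: less_imp_le)
  ultimately have t1n: "g (t0 - q) (t0 - q) < 0" using t0n by simp
  define t where "t = (1 / sqrt (- g (t0 - q) (t0 - q))) *\<^sub>R (t0 - q)"
  have tt: "g t t = -1" unfolding t_def by (rule normalize_neg[OF t1n])
  have tV: "t \<in> V" unfolding t_def using t1V sub_V by (simp add: subspace_scale)
  have tU: "g t u = 0" if "u \<in> U" for u unfolding t_def using t1U[OF that] by simp
  have tU': "g u t = 0" if "u \<in> U" for u using tU[OF that] gsym by metis
  define W where "W = {w \<in> V. (\<forall>u\<in>U. g w u = 0) \<and> g w t = 0}"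
  have subW: "subspace W" unfolding W_def using sub_V unfolding subspace_def by auto
  have pW: "0 < g w w" if "w \<in> W" "w \<noteq> 0" for w
    using tl_perp[of t w] that tt unfolding W_def by simp
  obtain B1 where B1: "finite B1" "B1 \<subseteq> W" "W \<subseteq> span B1" "\<forall>b\<in>B1. g b b = 1"
      "\<forall>b\<in>B1. \<forall>c\<in>B1. b \<noteq> c \<longrightarrow> g b c = 0"
    using onb[OF subW pW] by blast
  have B1V: "b \<in> V" if "b \<in> B1" for b using B1(2) that unfolding W_def by auto
  have B1U: "g u b = 0" if "b \<in> B1" "u \<in> U" for b u
    using B1(2) that gsym unfolding W_def by (metis (mono_tags, lifting) mem_Collect_eq subsetD)
  have B1t: "g b t = 0" if "b \<in> B1" for b using B1(2) that unfolding W_def by auto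
  show ?thesis
  proof (rule shape_i[OF ein tt B1(1) B2(1) B3fin])
    show "\<And>b. b \<in> B1 \<Longrightarrow> g b b = 1" using B1(4) by auto
    show "\<And>b. b \<in> B2 \<Longrightarrow> g b b = 1" using B2(4) by auto
    show "\<And>b. b \<in> B3 \<Longrightarrow> g b b = 1" using B3n by auto
    show "\<And>b c. b \<in> B1 \<Longrightarrow> c \<in> B1 \<Longrightarrow> b \<noteq> c \<Longrightarrow> g b c = 0" using B1(5) by auto
    show "\<And>b c. b \<in> B2 \<Longrightarrow> c \<in> B2 \<Longrightarrow> b \<noteq> c \<Longrightarrow> g b c = 0" using B2(5) by auto
    show "\<And>b c. b \<in> B3 \<Longrightarrow> c \<in> B3 \<Longrightarrow> b \<noteq> c \<Longrightarrow> g b c = 0" using B3o by auto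
    show "\<And>b c. b \<in> B1 \<Longrightarrow> c \<in> B2 \<Longrightarrow> g b c = 0" using B1U B2U gsym by metis
    show "\<And>b c. b \<in> B1 \<Longrightarrow> c \<in> B3 \<Longrightarrow> g b c = 0" using B1V B3Z VZ by blast
    show "\<And>b c. b \<in> B2 \<Longrightarrow> c \<in> B3 \<Longrightarrow> g b c = 0" using B2U UV B3Z VZ by blast
    show "\<And>b. b \<in> B1 \<union> B2 \<union> B3 \<Longrightarrow> g t b = 0"
      using B1t tU B2U VZ[OF tV B3Z] gsym by (metis Un_iff)
  next
    fix x assume xt: "g x t = 0" and xb: "\<And>b. b \<in> B1 \<union> B2 \<union> B3 \<Longrightarrow> g x b = 0"
    have xV: "x \<in> V" using orthZ xb by blast
    have "g x u = 0" if "u \<in> U" for u using orthU_B[OF B2(3) _ that] xb by blast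
    then have "x \<in> W" unfolding W_def using xV xt by blast
    moreover have "g x x = 0" using g_span0[of B1 x x] xb B1(3) \<open>x \<in> W\<close> by blast
    ultimately show "x = 0" using pW by force
  next
    fix a x y assume "a \<in> B1" then show "g (br x y) a = 0"
      using perpC1[OF dec B1V B1U] by blast
  next
    fix c show "g (br t c) t = 0" using perpC1[OF dec tV tU'] .
  next
    fix a b c assume "a \<in> B2" "b \<in> B2" then show "g (br b c) a = 0"
      using VZ2[OF UV[OF B2U] UZ[OF B2U]] by blast
  next
    fix b c assume "b \<in> B2" "c \<in> B2" then show "br b c = 0" using UU B2U by blast
  next
    fix b c assume "b \<in> B3" then show "br b c = 0" using ZcD B3Z by blast
  next
    fix x y a assume "a \<in> insert t (B1 \<union> B2 \<union> B3)"
    then consider "a \<in> Zc" | "a \<in> V" using tV B3Z B1V B2U UV by blast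
    then show "g (br x (br y a)) a = 0"
    proof cases
      case 1 then show ?thesis using ZcD2 by simp
    next
      case 2 then show ?thesis by (rule KZ0)
    qed
  qed
qed

end

context lorA begin

lemma caseA3:
  assumes hU: "\<And>u. u \<in> U \<Longrightarrow> 0 \<le> g u u" and n0U: "n0 \<in> U" and n00: "n0 \<noteq> 0" and nn: "g n0 n0 = 0"
  shows "0 \<le> lam"
proof -
  have nU: "g n0 u = 0" if "u \<in> U" for u using cs0[OF sub_U hU n0U nn that] .
  have nU': "g u n0 = 0" if "u \<in> U" for u using nU[OF that] gsym by metis
  have n0V: "n0 \<in> V" using UV[OF n0U] .
  obtain t0 where t0V: "t0 \<in> V" and t0n: "g t0 t0 < 0" using ex_t0 by blast
  have nt: "g n0 t0 \<noteq> 0"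
  proof
    assume "g n0 t0 = 0"
    then show False using tl_perp[OF t0n _ n00] nn by simp
  qed
  define m0 where "m0 = (1 / g n0 t0) *\<^sub>R t0"
  have nm0: "g n0 m0 = 1" unfolding m0_def using nt by simp
  define m where "m = m0 - (g m0 m0 / 2) *\<^sub>R n0"
  have nm: "g n0 m = 1" unfolding m_def using nm0 nn by simp
  have m0n: "g m0 n0 = 1" using nm0 gsym by metis
  have mm: "g m m = 0" unfolding m_def using nm0 m0n nn by (simp add: algebra_simps)
  have mV: "m \<in> V" unfolding m_def m0_def using t0V n0V sub_V by (simp add: subspace_diff subspace_scale)
  have mn: "g m n0 = 1" using nm gsym by metis
  define Us where "Us = {u \<in> U. g u m = 0}"
  have subUs: "subspace Us" unfolding Us_def using sub_U unfolding subspace_def by auto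
  have pUs: "0 < g u u" if uUs: "u \<in> Us" and u0: "u \<noteq> 0" for u
  proof -
    have uU: "u \<in> U" and um: "g u m = 0" using uUs unfolding Us_def by auto
    show ?thesis
    proof (rule ccontr)
      assume "\<not> 0 < g u u"
      then have uu: "g u u = 0" using hU[OF uU] by simp
      obtain c where "u = c *\<^sub>R n0" using null_par[OF nn uu nU[OF uU] n00] by blast
      then have "c = 0" using um nm by simp
      then show False using u0 \<open>u = c *\<^sub>R n0\<close> by simp
    qed
  qed
  obtain B2 where B2: "finite B2" "B2 \<subseteq> Us" "Us \<subseteq> span B2" "\<forall>b\<in>B2. g b b = 1"
      "\<forall>b\<in>B2. \<forall>c\<in>B2. b \<noteq> c \<longrightarrow> g b c = 0"
    using onb[OF subUs pUs] by blast
  have B2U: "b \<in> U" if "b \<in> B2" for b using B2(2) that unfolding Us_def by auto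
  have B2m: "g b m = 0" if "b \<in> B2" for b using B2(2) that unfolding Us_def by auto
  define W where "W = {w \<in> V. g w n0 = 0 \<and> g w m = 0 \<and> (\<forall>u\<in>Us. g w u = 0)}"
  have subW: "subspace W" unfolding W_def using sub_V unfolding subspace_def by auto
  have tneg: "g (n0 - m) (n0 - m) < 0" using nn mm nm mn by simp
  have pW: "0 < g w w" if "w \<in> W" "w \<noteq> 0" for w
    using tl_perp[OF tneg _ that(2)] that(1) unfolding W_def by simp
  obtain B1 where B1: "finite B1" "B1 \<subseteq> W" "W \<subseteq> span B1" "\<forall>b\<in>B1. g b b = 1"
      "\<forall>b\<in>B1. \<forall>c\<in>B1. b \<noteq> c \<longrightarrow> g b c = 0"
    using onb[OF subW pW] by blast
  have WU: "g w u = 0" if wW: "w \<in> W" and uU: "u \<in> U" for w u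
  proof -
    have "u - g u m *\<^sub>R n0 \<in> Us" unfolding Us_def using uU n0U sub_U nm
      by (simp add: subspace_diff subspace_scale mn)
    then have "g w (u - g u m *\<^sub>R n0) = 0" using wW unfolding W_def by blast
    moreover have "g w n0 = 0" using wW unfolding W_def by blast
    ultimately show ?thesis by simp
  qed
  have B1V: "b \<in> V" if "b \<in> B1" for b using B1(2) that unfolding W_def by auto
  have B1U: "g u b = 0" if "b \<in> B1" "u \<in> U" for b u using WU[of b u] B1(2) that gsym by (metis subsetD)
  have B1n: "g b n0 = 0" "g b m = 0" if "b \<in> B1" for b using B1(2) that unfolding W_def by auto
  have V0: "v \<in> V" if "v \<in> {n0, m} \<union> B1 \<union> B2" for v using that n0V mV B1V B2U UV by blast
  show ?thesis
  proof (rule shape_ii[OF ein nn mm nm B1(1) B2(1) B3fin])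
    show "\<And>b. b \<in> B1 \<Longrightarrow> g b b = 1" using B1(4) by auto
    show "\<And>b. b \<in> B2 \<Longrightarrow> g b b = 1" using B2(4) by auto
    show "\<And>b. b \<in> B3 \<Longrightarrow> g b b = 1" using B3n by auto
    show "\<And>b c. b \<in> B1 \<Longrightarrow> c \<in> B1 \<Longrightarrow> b \<noteq> c \<Longrightarrow> g b c = 0" using B1(5) by auto
    show "\<And>b c. b \<in> B2 \<Longrightarrow> c \<in> B2 \<Longrightarrow> b \<noteq> c \<Longrightarrow> g b c = 0" using B2(5) by auto
    show "\<And>b c. b \<in> B3 \<Longrightarrow> c \<in> B3 \<Longrightarrow> b \<noteq> c \<Longrightarrow> g b c = 0" using B3o by auto
    show "\<And>b c. b \<in> B1 \<Longrightarrow> c \<in> B2 \<Longrightarrow> g b c = 0" using B1U B2U gsym by metis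
    show "\<And>b c. b \<in> B1 \<Longrightarrow> c \<in> B3 \<Longrightarrow> g b c = 0" using B1V B3Z VZ by blast
    show "\<And>b c. b \<in> B2 \<Longrightarrow> c \<in> B3 \<Longrightarrow> g b c = 0" using B2U UV B3Z VZ by blast
    show "\<And>b. b \<in> B1 \<union> B2 \<union> B3 \<Longrightarrow> g n0 b = 0"
      using B1n(1) nU B2U VZ[OF n0V B3Z] gsym by (metis Un_iff)
    show "\<And>b. b \<in> B1 \<union> B2 \<union> B3 \<Longrightarrow> g m b = 0"
      using B1n(2) B2m VZ[OF mV B3Z] gsym by (metis Un_iff)
  next
    fix x assume xn: "g x n0 = 0" and xm: "g x m = 0" and xb: "\<And>b. b \<in> B1 \<union> B2 \<union> B3 \<Longrightarrow> g x b = 0"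
    have xV: "x \<in> V" using orthZ xb by blast
    have "g x u = 0" if "u \<in> Us" for u using g_span0[of B2 x u] xb B2(3) that by blast
    then have "x \<in> W" unfolding W_def using xV xn xm by blast
    moreover have "g x x = 0" using g_span0[of B1 x x] xb B1(3) \<open>x \<in> W\<close> by blast
    ultimately show "x = 0" using pW by force
  next
    fix a x y assume "a \<in> B1" then show "g (br x y) a = 0"
      using perpC1[OF dec B1V B1U] by blast
  next
    fix u c v assume "u \<in> insert n0 B2" "v \<in> {n0, m} \<union> B1 \<union> B2"
    then show "g (br u c) v = 0" using VZ2[OF V0 UZ] n0U B2U by blast
  next
    fix u u' assume "u \<in> insert n0 B2" "u' \<in> insert n0 B2"
    then show "br u u' = 0" using UU n0U B2U by blast
  next
    fix b c assume "b \<in> B3" then show "br b c = 0" using ZcD B3Z by blast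
  next
    fix z show "g (br z m) n0 = 0" using perpC1[OF dec n0V nU'] .
  next
    fix x y a assume "a \<in> B1 \<union> B2 \<union> B3"
    then consider "a \<in> Zc" | "a \<in> V" using B3Z B1V B2U UV by blast
    then show "g (br x (br y a)) a = 0"
    proof cases
      case 1 then show ?thesis using ZcD2 by simp
    next
      case 2 then show ?thesis by (rule KZ0)
    qed
  next
    fix x y show "g (br x (br y n0)) m = 0" using VZ2[OF mV KZ] .
  next
    fix x y show "g (br x (br y m)) n0 = 0" using VZ2[OF n0V KZ] .
  qed
qed

lemma caseA: "0 \<le> lam"
proof (cases "\<exists>u\<in>U. g u u < 0")
  case True then show ?thesis using caseA2 by blast
next
  case False
  then have hU: "\<And>u. u \<in> U \<Longrightarrow> 0 \<le> g u u" by (simp add: not_less)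
  show ?thesis
  proof (cases "\<forall>u\<in>U. u \<noteq> 0 \<longrightarrow> 0 < g u u")
    case True then show ?thesis using caseA1 by blast
  next
    case False
    then obtain n0 where "n0 \<in> U" "n0 \<noteq> 0" "\<not> 0 < g n0 n0" by blast
    moreover then have "g n0 n0 = 0" using hU by force
    ultimately show ?thesis using caseA3 hU by blast
  qed
qed

end

context lor3 begin

lemma main: "0 \<le> lam"
proof (cases "\<exists>t\<in>Zc. g t t < 0")
  case True then show ?thesis using caseB by blast
next
  case False
  then have hZ: "\<And>z. z \<in> Zc \<Longrightarrow> 0 \<le> g z z" by (simp add: not_less)
  have pZ: "0 < g z z" if zZ: "z \<in> Zc" and z0: "z \<noteq> 0" for z
  proof (rule ccontr)
    assume "\<not> 0 < g z z"
    then have "g z z = 0" using hZ[OF zZ] by simp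
    then have "\<forall>w\<in>Zc. g z w = 0" using cs0[OF sub_Zc hZ zZ] by blast
    then have "z = 0" using nd zZ unfolding nondegenerate_on_def Zc_def by blast
    then show False using z0 by simp
  qed
  obtain B3 where B3: "finite B3" "B3 \<subseteq> Zc" "Zc \<subseteq> span B3" "\<forall>b\<in>B3. g b b = 1"
      "\<forall>b\<in>B3. \<forall>c\<in>B3. b \<noteq> c \<longrightarrow> g b c = 0"
    using onb[OF sub_Zc pZ] by blast
  interpret lorA br g e0 lam B3
    by unfold_locales (use hZ B3 in auto)
  show ?thesis by (rule caseA)
qed

end

context lz begin
lemma lor_pos:
  assumes fr: "frame B fd" and fdB: "\<And>e. e \<in> B \<Longrightarrow> fd e = g e e *\<^sub>R e" and e0B: "e0 \<in> B"
    and nB: "\<And>e. e \<in> B - {e0} \<Longrightarrow> g e e = 1" and ye: "g y e0 = 0" and y0: "y \<noteq> 0"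
  shows "0 < g y y"
proof -
  have fin: "finite B" using fr unfolding frame_def by simp
  have "g y y = (\<Sum>e\<in>B. g y (fd e) * g e y)" by (rule frame_g[OF fr])
  also have "\<dots> = (\<Sum>e\<in>B. g e e * (g y e * g y e))"
    by (rule sum.cong[OF refl]) (simp add: fdB gsym[of _ y])
  also have "\<dots> = g e0 e0 * (g y e0 * g y e0) + (\<Sum>e\<in>B - {e0}. g e e * (g y e * g y e))"
    using fin e0B by (simp add: sum.remove)
  also have "\<dots> = (\<Sum>e\<in>B - {e0}. g y e * g y e)" using ye nB by simp
  finally have gyy: "g y y = (\<Sum>e\<in>B - {e0}. g y e * g y e)" .
  have nn: "0 \<le> g y y" unfolding gyy by (rule sum_nonneg) simp
  show ?thesis
  proof (rule ccontr)
    assume "\<not> 0 < g y y"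
    then have "(\<Sum>e\<in>B - {e0}. g y e * g y e) = 0" using nn gyy by simp
    then have "\<forall>e\<in>B - {e0}. g y e * g y e = 0" using fin by (subst (asm) sum_nonneg_eq_0_iff) auto
    then have z: "g y e = 0" if "e \<in> B" for e using that ye by (cases "e = e0") auto
    have "y = (\<Sum>e\<in>B. g y (fd e) *\<^sub>R e)" by (rule frame_rep[OF fr])
    also have "\<dots> = 0" by (rule sum.neutral) (simp add: fdB z)
    finally show False using y0 by simp
  qed
qed
end

theorem theorem3p1:
  fixes br :: "'a::euclidean_space \<Rightarrow> 'a \<Rightarrow> 'a"
    and g :: "'a \<Rightarrow> 'a \<Rightarrow> real"
    and lam :: real
  assumes "lie_algebra br"
    and "three_step_nilpotent br"
    and "lorentzian g"
    and "nondegenerate_on g (center br)"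
    and "einstein br g lam"
  shows "lam \<ge> 0"
proof -
  from assms(3) have bil: "bilinear g" and sym: "\<And>x y. g x y = g y x" and ndg: "nondegenerate g"
    unfolding lorentzian_def by auto
  from assms(3) obtain B e0 where indep: "independent B" and spB: "span B = UNIV" and e0B: "e0 \<in> B"
    and e0n: "g e0 e0 = -1" and nB: "\<forall>e\<in>B - {e0}. g e e = 1" and oB: "\<forall>e\<in>B. \<forall>f\<in>B. e \<noteq> f \<longrightarrow> g e f = 0"
    unfolding lorentzian_def by blast
  interpret lz0 br g
    by unfold_locales (use assms(1) bil sym ndg in \<open>auto simp: nondegenerate_def\<close>)
  have fin: "finite B" using independent_bound_general[OF indep] by simp
  define fd where "fd e = g e e *\<^sub>R e" for e
  have sq: "g e e * g e e = 1" if "e \<in> B" for e using nB e0n that by (cases "e = e0") auto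
  have fr: "frame B fd"
  proof (rule frame_biorth[OF fin])
    fix a b assume "a \<in> B" "b \<in> B"
    then show "g a (fd b) = (if a = b then 1 else 0)" unfolding fd_def using oB sq by auto
  next
    fix x assume h: "\<And>a. a \<in> B \<Longrightarrow> g x (fd a) = 0"
    have hb: "g x b = 0" if "b \<in> B" for b
    proof -
      have "g b b * g x b = 0" using h[OF that] unfolding fd_def by simp
      moreover have "g b b \<noteq> 0" using sq[OF that] by auto
      ultimately show ?thesis by simp
    qed
    have "g x y = 0" for y
      using linear_eq_0_on_span[OF g_linR, of B x y] hb spB by blast
    then show "x = 0" by (rule gnd)
  qed
  interpret lz br g
    by unfold_locales (use fr in \<open>auto simp: frame_def\<close>)
  have pos: "0 < g y y" if "g y e0 = 0" "y \<noteq> 0" for y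
    by (rule lor_pos[OF fr _ e0B _ that]) (use nB in \<open>auto simp: fd_def\<close>)
  interpret lor br g e0
    by unfold_locales (use e0n pos in auto)
  interpret lor3 br g e0 lam
    by unfold_locales (use assms(2,4,5) in \<open>auto simp: three_step_nilpotent_def\<close>)
  show ?thesis using main by simp
qed

end
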